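(* Let $\Lambda,\mu,\beta,\rho,\phi,\alpha,\omega>0$, $\psi\ge 0$, $0<\eta_C\le1$, $\eta_A\ge 1$, and set $\beta_1=\beta\mu/\Lambda$, $\xi_1=\alpha+\mu$, $\xi_2=\omega+\mu$, $\xi_3=\rho+\phi+\mu$. Consider the system \begin{align*} \dot S&=\Lambda-\beta_1(I+\eta_C C+\eta_A A)S-(\mu+\psi)S,\\ \dot I&=\beta_1(I+\eta_C C+\eta_A A)S-\xi_3 I+\alpha A+\omega C,\\ \dot C&=\phi I-\xi_2 C,\\ \dot A&=\rho I-\xi_1 A,\\ \dot E&=\psi S-\mu E, \end{align*} on the region $\Omega_P=\{(S,I,C,A,E)\in\mathbb{R}_{\ge0}^5: S\le \Lambda/(\psi+\mu),\ E\le \psi\Lambda/(\mu(\psi+\mu)),\ S+I+C+A+E\le\Lambda/\mu\}$, and let $\Omega_{P0}=\{(S,I,C,A,E)\in\Omega_P: I=C=A=0\}$. Define $$R_0=\frac{\Lambda\,\beta_1\bigl(\xi_2(\xi_1+\rho\eta_A)+\eta_C\phi\xi_1\bigr)}{(\mu+\psi)\,\mu\bigl(\xi_2(\rho+\xi_1)+\phi\xi_1\bigr)}.$$ If $R_0>1$, then the unique endemic equilibrium $\tilde\Sigma_+=(\tilde S,\tilde I,\tilde C,\tilde A,\tilde E)$ of this system (the unique equilibrium with $\tilde I,\tilde C,\tilde A>0$), whose first and last components are $$\tilde S=\frac{\mu(\xi_1(\phi+\xi_2)+\rho\xi_2)}{\beta_1(\xi_1(\xi_2+\eta_C\phi)+\eta_A\rho\xi_2)},\qquad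 \tilde E=\frac{\psi\,\tilde S}{\mu},$$ is globally asymptotically stable in $\Omega_P\setminus\Omega_{P0}$.
   Context: This is the limiting (mass-action) form of an HIV/AIDS model with pre-exposure prophylaxis (PrEP), in the case of zero AIDS-induced death rate and no abandonment of PrEP: $S$ susceptible, $I$ pre-AIDS HIV-infected, $C$ HIV-infected under antiretroviral treatment, $A$ with AIDS symptoms, $E$ susceptible individuals under PrEP; $\psi$ is the rate at which susceptibles start PrEP. $R_0$ is the basic reproduction number of this system. *)

theory Defs
  imports "HOL-Analysis.Analysis"
begin

type_synonym state5 = "real \<times> real \<times> real \<times> real \<times> real"
  \<comment> \<open>(S, I, C, A, E)\<close>

text \<open>Right-hand side of the PrEP model (limiting mass-action form, no AIDS death,
  no PrEP abandonment). Parameters: Lam mu beta rho phi alpha omega psi etaC etaA.\<close>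
definition hiv_rhs ::
  "real \<Rightarrow> real \<Rightarrow> real \<Rightarrow> real \<Rightarrow> real \<Rightarrow> real \<Rightarrow> real \<Rightarrow> real \<Rightarrow> real \<Rightarrow> real
   \<Rightarrow> state5 \<Rightarrow> state5" where
  "hiv_rhs Lam mu beta rho phi alpha omega psi etaC etaA =
     (\<lambda>(S, I, C, A, E).
        let beta1 = beta * mu / Lam; xi1 = alpha + mu; xi2 = omega + mu; xi3 = rho + phi + mu
        in ( Lam - beta1 * (I + etaC * C + etaA * A) * S - (mu + psi) * S,
             beta1 * (I + etaC * C + etaA * A) * S - xi3 * I + alpha * A + omega * C,
             phi * I - xi2 * C,
             rho * I - xi1 * A,
             psi * S - mu * E))"

definition OmegaP :: "real \<Rightarrow> real \<Rightarrow> real \<Rightarrow> state5 set" where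
  "OmegaP Lam mu psi = {(S, I, C, A, E). S \<ge> 0 \<and> I \<ge> 0 \<and> C \<ge> 0 \<and> A \<ge> 0 \<and> E \<ge> 0 \<and>
      S \<le> Lam / (psi + mu) \<and> E \<le> psi * Lam / (mu * (psi + mu)) \<and>
      S + I + C + A + E \<le> Lam / mu}"

definition OmegaP0 :: "real \<Rightarrow> real \<Rightarrow> real \<Rightarrow> state5 set" where
  "OmegaP0 Lam mu psi = {(S, I, C, A, E). (S, I, C, A, E) \<in> OmegaP Lam mu psi \<and> I = 0 \<and> C = 0 \<and> A = 0}"

definition is_solution :: "(state5 \<Rightarrow> state5) \<Rightarrow> (real \<Rightarrow> state5) \<Rightarrow> bool" where
  "is_solution F x \<longleftrightarrow> (\<forall>t\<ge>0. (x has_vector_derivative F (x t)) (at t within {0..}))"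

definition gas_in :: "(state5 \<Rightarrow> state5) \<Rightarrow> state5 \<Rightarrow> state5 set \<Rightarrow> bool" where
  "gas_in F p D \<longleftrightarrow>
     F p = 0 \<and>
     (\<forall>\<epsilon>>0. \<exists>\<delta>>0. \<forall>x. is_solution F x \<and> x 0 \<in> D \<and> dist (x 0) p < \<delta>
          \<longrightarrow> (\<forall>t\<ge>0. dist (x t) p < \<epsilon>)) \<and>
     (\<forall>x. is_solution F x \<and> x 0 \<in> D \<longrightarrow> (x \<longlongrightarrow> p) at_top)"

definition R0 ::
  "real \<Rightarrow> real \<Rightarrow> real \<Rightarrow> real \<Rightarrow> real \<Rightarrow> real \<Rightarrow> real \<Rightarrow> real \<Rightarrow> real \<Rightarrow> real \<Rightarrow> real" where
  "R0 Lam mu beta rho phi alpha omega psi etaC etaA =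
     (let beta1 = beta * mu / Lam; xi1 = alpha + mu; xi2 = omega + mu
      in Lam * beta1 * (xi2 * (xi1 + rho * etaA) + etaC * phi * xi1)
         / ((mu + psi) * mu * (xi2 * (rho + xi1) + phi * xi1)))"

end

theory Submission
  imports Defs
begin

lemma vd_fst: "(x has_vector_derivative v) F \<Longrightarrow> ((\<lambda>t. fst (x t)) has_real_derivative fst v) F"
  unfolding has_vector_derivative_def has_field_derivative_def
proof -
  assume "(x has_derivative (\<lambda>h. h *\<^sub>R v)) F"
  from has_derivative_fst[OF this] have "((\<lambda>t. fst (x t)) has_derivative (\<lambda>h. fst (h *\<^sub>R v))) F" .
  moreover have "(\<lambda>h. fst (h *\<^sub>R v)) = (*) (fst v)" by (auto simp: fun_eq_iff)
  ultimately show "((\<lambda>t. fst (x t)) has_derivative (*) (fst v)) F" by simp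
qed

lemma vd_snd: "(x has_vector_derivative v) F \<Longrightarrow> ((\<lambda>t. snd (x t)) has_vector_derivative snd v) F"
  unfolding has_vector_derivative_def
  by (drule has_derivative_snd) simp

lemma vd_snd_real: "(x has_vector_derivative v) F \<Longrightarrow> ((\<lambda>t. snd (x t)) has_real_derivative (snd v::real)) F"
  unfolding has_vector_derivative_def has_field_derivative_def
proof -
  assume "(x has_derivative (\<lambda>h. h *\<^sub>R v)) F"
  from has_derivative_snd[OF this] have "((\<lambda>t. snd (x t)) has_derivative (\<lambda>h. snd (h *\<^sub>R v))) F" .
  moreover have "(\<lambda>h. snd (h *\<^sub>R v)) = (*) (snd v)" by (auto simp: fun_eq_iff)
  ultimately show "((\<lambda>t. snd (x t)) has_derivative (*) (snd v)) F" by simp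
qed

lemma negsq_DERIV: "DERIV (\<lambda>v::real. (min v 0)^2) v :> 2 * min v 0"
proof (cases "v < 0")
  case True
  have "DERIV (\<lambda>v::real. v^2) v :> 2 * min v 0" using True by (auto intro!: derivative_eq_intros)
  then show ?thesis
    by (rule has_field_derivative_transform_within_open[where S="{..<0}"]) (use True in auto)
next
  case False
  show ?thesis
  proof (cases "v > 0")
    case True
    have "DERIV (\<lambda>v::real. 0) v :> 2 * min v 0" using True by (auto intro!: derivative_eq_intros)
    then show ?thesis
      by (rule has_field_derivative_transform_within_open[where S="{0<..}"]) (use True in auto)
  next
    case False
    with \<open>\<not> v<0\<close> have v: "v = 0" by auto
    have "DERIV (\<lambda>v::real. (min v 0)^2) 0 :> 0"
      unfolding CARAT_DERIV
    proof (rule exI[where x="\<lambda>z. min z 0"], intro conjI allI)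
      show "isCont (\<lambda>z::real. min z 0) 0" by (intro continuous_intros)
    qed (auto simp: power2_eq_square min_def)
    then show ?thesis using v by simp
  qed
qed

lemma negsq_deriv:
  assumes "(f has_real_derivative f') (at t)"
  shows "((\<lambda>t. (min (f t) 0)^2) has_real_derivative (2 * min (f t) 0 * f')) (at t)"
  using DERIV_chain2[OF negsq_DERIV assms] by simp

lemma gronwall0:
  fixes q q' :: "real \<Rightarrow> real"
  assumes cont: "continuous_on {0..b} q"
    and der: "\<And>t. 0 < t \<Longrightarrow> t < b \<Longrightarrow> (q has_real_derivative q' t) (at t)"
    and le: "\<And>t. 0 < t \<Longrightarrow> t < b \<Longrightarrow> q' t \<le> K * q t"
    and q0: "q 0 = 0" and nn: "\<And>t. 0 \<le> t \<Longrightarrow> t \<le> b \<Longrightarrow> q t \<ge> 0"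
    and t: "0 \<le> t" "t \<le> b"
  shows "q t = 0"
proof -
  let ?r = "\<lambda>s. q s * exp (- K * s)"
  have "?r t \<le> ?r 0"
  proof (rule DERIV_nonpos_imp_decreasing_open[OF t(1)])
    fix s assume s: "0 < s" "s < t"
    have "(?r has_real_derivative (q' s * exp (- K * s) + q s * (exp (- K * s) * (- K)))) (at s)"
      using s t by (auto intro!: derivative_eq_intros der)
    moreover have "q' s * exp (- K * s) + q s * (exp (- K * s) * (- K)) = exp (- K * s) * (q' s - K * q s)"
      by (simp add: algebra_simps)
    moreover have "exp (- K * s) * (q' s - K * q s) \<le> 0"
      using le[of s] s t by (simp add: mult_nonneg_nonpos)
    ultimately show "\<exists>y. (?r has_real_derivative y) (at s) \<and> y \<le> 0" by metis
  next
    show "continuous_on {0..t} ?r"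
      using cont t by (auto intro!: continuous_intros elim: continuous_on_subset)
  qed
  then have "q t * exp (- K * t) \<le> 0" using q0 by simp
  then have "q t \<le> 0" by (simp add: mult_le_0_iff)
  with nn[OF t] show ?thesis by simp
qed

lemma within_to_at:
  assumes "(f has_real_derivative f') (at t within {0..})" "0 < t"
  shows "(f has_real_derivative f') (at t)"
proof -
  have "t \<in> interior {0..}" using assms(2) by (simp add: interior_real_atLeast)
  then have "at t within {0..} = at t" by (rule at_within_interior)
  with assms(1) show ?thesis by simp
qed

lemma within_cont:
  assumes "\<And>t. 0 \<le> t \<Longrightarrow> (f has_real_derivative f' t) (at t within {0..})"
  shows "continuous_on {0..} f"
  unfolding continuous_on_eq_continuous_within
  using assms by (auto intro: DERIV_continuous)


lemma lip_lower:
  fixes F F' :: "real \<Rightarrow> real"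
  assumes "\<And>s. a \<le> s \<Longrightarrow> s \<le> b \<Longrightarrow> (F has_real_derivative F' s) (at s)"
    and "\<And>s. a \<le> s \<Longrightarrow> s \<le> b \<Longrightarrow> \<bar>F' s\<bar> \<le> M" and "a \<le> b"
  shows "F b \<ge> F a - M * (b - a)"
proof -
  have "(\<lambda>s. F s + M * s) a \<le> (\<lambda>s. F s + M * s) b"
  proof (rule DERIV_nonneg_imp_nondecreasing[OF assms(3)])
    fix s assume s: "a \<le> s" "s \<le> b"
    have "((\<lambda>s. F s + M * s) has_real_derivative F' s + M) (at s)"
      using assms(1)[OF s] by (auto intro!: derivative_eq_intros)
    moreover have "F' s + M \<ge> 0" using assms(2)[OF s] by linarith
    ultimately show "\<exists>y. ((\<lambda>s. F s + M * s) has_real_derivative y) (at s) \<and> 0 \<le> y" by blast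
  qed
  then show ?thesis by (simp add: algebra_simps)
qed

lemma slope_upper:
  fixes g g' :: "real \<Rightarrow> real"
  assumes "\<And>s. a \<le> s \<Longrightarrow> s \<le> b \<Longrightarrow> (g has_real_derivative g' s) (at s)"
    and "\<And>s. a \<le> s \<Longrightarrow> s \<le> b \<Longrightarrow> g' s \<le> c" and "a \<le> b"
  shows "g b \<le> g a + c * (b - a)"
proof -
  have "(\<lambda>s. g s - c * s) a \<ge> (\<lambda>s. g s - c * s) b"
  proof (rule DERIV_nonpos_imp_nonincreasing[OF assms(3)])
    fix s assume s: "a \<le> s" "s \<le> b"
    have "((\<lambda>s. g s - c * s) has_real_derivative g' s - c) (at s)"
      using assms(1)[OF s] by (auto intro!: derivative_eq_intros)
    moreover have "g' s - c \<le> 0" using assms(2)[OF s] by linarith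
    ultimately show "\<exists>y. ((\<lambda>s. g s - c * s) has_real_derivative y) (at s) \<and> y \<le> 0" by blast
  qed
  then show ?thesis by (simp add: algebra_simps)
qed

lemma barbalat1:
  fixes g g' F F' :: "real \<Rightarrow> real"
  assumes dg: "\<And>t. t \<ge> t0 \<Longrightarrow> (g has_real_derivative g' t) (at t)"
    and gF: "\<And>t. t \<ge> t0 \<Longrightarrow> g' t \<le> - F t"
    and F0: "\<And>t. t \<ge> t0 \<Longrightarrow> F t \<ge> 0"
    and dF: "\<And>t. t \<ge> t0 \<Longrightarrow> (F has_real_derivative F' t) (at t)"
    and bF: "\<And>t. t \<ge> t0 \<Longrightarrow> \<bar>F' t\<bar> \<le> M"
    and gL: "\<And>t. t \<ge> t0 \<Longrightarrow> g t \<ge> L"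
  shows "(F \<longlongrightarrow> 0) at_top"
proof (rule tendstoI)
  fix \<epsilon> :: real assume ep: "\<epsilon> > 0"
  have M0: "M \<ge> 0" using bF[of t0] by simp
  define h where "h = \<epsilon> / (2 * (M + 1))"
  have h0: "h > 0" using ep M0 by (simp add: h_def)
  have Mh: "M * h \<le> \<epsilon> / 2"
    using ep M0 by (simp add: h_def field_simps)
  define m where "m = Inf (g ` {t0..})"
  have bdd: "bdd_below (g ` {t0..})" using gL by (auto intro!: bdd_belowI2)
  have mle: "m \<le> g t" if "t \<ge> t0" for t
    unfolding m_def using bdd that by (auto intro: cInf_lower)
  have "m < m + \<epsilon> * h / 2" using ep h0 by simp
  moreover have ne: "g ` {t0..} \<noteq> {}" by auto
  ultimately have "\<exists>x\<in>g ` {t0..}. x < m + \<epsilon> * h / 2"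
    unfolding m_def using bdd cInf_less_iff[OF ne bdd] by blast
  then obtain T where T: "T \<ge> t0" "g T < m + \<epsilon> * h / 2" by auto
  have gdec: "g b \<le> g a" if "t0 \<le> a" "a \<le> b" for a b
  proof -
    have "g b \<le> g a + 0 * (b - a)"
    proof (rule slope_upper[of a b g g'])
      fix s assume s: "a \<le> s" "s \<le> b"
      then have "t0 \<le> s" using that by simp
      then show "(g has_real_derivative g' s) (at s)" "g' s \<le> 0"
        using dg gF[of s] F0[of s] by auto
    qed (use that in auto)
    then show ?thesis by simp
  qed
  show "eventually (\<lambda>t. dist (F t) 0 < \<epsilon>) at_top"
    unfolding eventually_at_top_linorder
  proof (intro exI allI impI)
    fix t assume tT: "t \<ge> T"
    have t0t: "t \<ge> t0" using tT T by simp
    have "F t < \<epsilon>"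
    proof (rule ccontr)
      assume "\<not> F t < \<epsilon>"
      then have Ft: "F t \<ge> \<epsilon>" by simp
      have Fs: "F s \<ge> \<epsilon> / 2" if "t \<le> s" "s \<le> t + h" for s
      proof -
        have "F s \<ge> F t - M * (s - t)"
          by (rule lip_lower[of t s F F' M]) (use that t0t dF bF in auto)
        moreover have "M * (s - t) \<le> M * h" using that M0 by (simp add: mult_left_mono)
        ultimately show ?thesis using Ft Mh by linarith
      qed
      have "g (t + h) \<le> g t + (- (\<epsilon> / 2)) * ((t + h) - t)"
      proof (rule slope_upper[of t "t+h" g g'])
        fix s assume s: "t \<le> s" "s \<le> t + h"
        then have "t0 \<le> s" using t0t by simp
        then show "(g has_real_derivative g' s) (at s)" "g' s \<le> - (\<epsilon> / 2)"
          using dg gF[of s] Fs[OF s] by auto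
      qed (use h0 in auto)
      moreover have "g t \<le> g T" using gdec[of T t] T tT by simp
      moreover have "g (t + h) \<ge> m" using mle[of "t+h"] t0t h0 by simp
      ultimately show False using T by (simp add: algebra_simps)
    qed
    then show "dist (F t) 0 < \<epsilon>" using F0[OF t0t] by simp
  qed
qed

lemma barbalat2_half:
  fixes g f f' :: "real \<Rightarrow> real"
  assumes dg: "\<And>t. t \<ge> t0 \<Longrightarrow> (g has_real_derivative f t) (at t)"
    and df: "\<And>t. t \<ge> t0 \<Longrightarrow> (f has_real_derivative f' t) (at t)"
    and bf: "\<And>t. t \<ge> t0 \<Longrightarrow> \<bar>f' t\<bar> \<le> M"
    and gL: "(g \<longlongrightarrow> L) at_top" and ep: "\<epsilon> > 0"
  shows "eventually (\<lambda>t. f t < \<epsilon>) at_top"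
proof -
  have M0: "M \<ge> 0" using bf[of t0] by simp
  define h where "h = \<epsilon> / (2 * (M + 1))"
  have h0: "h > 0" using ep M0 by (simp add: h_def)
  have Mh: "M * h \<le> \<epsilon> / 2"
    using ep M0 by (simp add: h_def field_simps)
  have "eventually (\<lambda>t. dist (g t) L < \<epsilon> * h / 4) at_top"
    using tendstoD[OF gL, of "\<epsilon> * h / 4"] ep h0 by simp
  then obtain T where T: "\<And>t. t \<ge> T \<Longrightarrow> dist (g t) L < \<epsilon> * h / 4"
    unfolding eventually_at_top_linorder by blast
  show ?thesis unfolding eventually_at_top_linorder
  proof (intro exI allI impI)
    fix t assume tT: "t \<ge> max T t0"
    have t0t: "t \<ge> t0" using tT by simp
    show "f t < \<epsilon>"
    proof (rule ccontr)
      assume "\<not> f t < \<epsilon>"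
      then have Ft: "f t \<ge> \<epsilon>" by simp
      have Fs: "f s \<ge> \<epsilon> / 2" if "t \<le> s" "s \<le> t + h" for s
      proof -
        have "f s \<ge> f t - M * (s - t)"
          by (rule lip_lower[of t s f f' M]) (use that t0t df bf in auto)
        moreover have "M * (s - t) \<le> M * h" using that M0 by (simp add: mult_left_mono)
        ultimately show ?thesis using Ft Mh by linarith
      qed
      have "(\<lambda>s. - g s) (t + h) \<le> (\<lambda>s. - g s) t + (- (\<epsilon> / 2)) * ((t + h) - t)"
        by (rule slope_upper[of t "t+h" _ "\<lambda>s. - f s"]) (use dg Fs t0t h0 in \<open>auto intro!: derivative_eq_intros\<close>)
      moreover have "dist (g t) L < \<epsilon> * h / 4" "dist (g (t+h)) L < \<epsilon> * h / 4"
        using T tT h0 by auto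
      ultimately have A: "g (t + h) \<ge> g t + \<epsilon> * h / 2" and B: "\<bar>g t - L\<bar> < \<epsilon> * h / 4" "\<bar>g (t + h) - L\<bar> < \<epsilon> * h / 4"
        by (simp_all add: dist_real_def algebra_simps)
      from B have "g t > L - \<epsilon> * h / 4" "g (t + h) < L + \<epsilon> * h / 4"
        unfolding abs_less_iff by linarith+
      with A show False by linarith
    qed
  qed
qed

lemma barbalat2:
  fixes g f f' :: "real \<Rightarrow> real"
  assumes dg: "\<And>t. t \<ge> t0 \<Longrightarrow> (g has_real_derivative f t) (at t)"
    and df: "\<And>t. t \<ge> t0 \<Longrightarrow> (f has_real_derivative f' t) (at t)"
    and bf: "\<And>t. t \<ge> t0 \<Longrightarrow> \<bar>f' t\<bar> \<le> M"
    and gL: "(g \<longlongrightarrow> L) at_top"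
  shows "(f \<longlongrightarrow> 0) at_top"
proof (rule tendstoI)
  fix \<epsilon> :: real assume ep: "\<epsilon> > 0"
  have 1: "eventually (\<lambda>t. f t < \<epsilon>) at_top"
    by (rule barbalat2_half[OF dg df bf gL ep])
  have 2: "eventually (\<lambda>t. - f t < \<epsilon>) at_top"
  proof (rule barbalat2_half[of t0 "\<lambda>t. - g t" "\<lambda>t. - f t" "\<lambda>t. - f' t" M "- L"])
    show "((\<lambda>t. - g t) \<longlongrightarrow> - L) at_top" by (rule tendsto_minus[OF gL])
    fix t assume "t0 \<le> t"
    show "((\<lambda>t. - g t) has_real_derivative - f t) (at t)" using dg[OF \<open>t0 \<le> t\<close>] by (rule DERIV_minus)
    show "((\<lambda>t. - f t) has_real_derivative - f' t) (at t)" using df[OF \<open>t0 \<le> t\<close>] by (rule DERIV_minus)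
    show "\<bar>- f' t\<bar> \<le> M" using bf[OF \<open>t0 \<le> t\<close>] by simp
  qed (use ep in auto)
  show "eventually (\<lambda>t. dist (f t) 0 < \<epsilon>) at_top"
    using eventually_conj[OF 1 2] by eventually_elim (simp add: abs_less_iff)
qed


lemma gfun_nonneg: "0 < x \<Longrightarrow> 0 \<le> x - 1 - ln (x::real)"
  using ln_le_minus_one[of x] by simp

lemma gfun_upper: assumes "0 < (x::real)" shows "x - 1 - ln x \<le> (x - 1)^2 / x"
proof -
  have "ln (1/x) \<le> 1/x - 1" using assms by (intro ln_le_minus_one) simp
  then have "- ln x \<le> 1/x - 1" using assms by (simp add: ln_div)
  moreover have "(x - 1)^2 / x = x - 2 + 1/x" using assms by (simp add: field_simps power2_eq_square)
  ultimately show ?thesis by linarith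
qed

lemma gfun_lower:
  assumes x: "0 < (x::real)" "x \<le> M" and M: "1 \<le> M"
  shows "(x - 1)^2 / (2 * M) \<le> x - 1 - ln x"
proof (cases "x \<le> 1")
  case True
  let ?h = "\<lambda>y::real. y - 1 - ln y - (y - 1)^2 / 2"
  have "?h x \<ge> ?h 1"
  proof (rule DERIV_nonpos_imp_nonincreasing[OF True])
    fix y assume y: "x \<le> y" "y \<le> 1"
    then have y0: "y > 0" using x by simp
    have "(?h has_real_derivative (1 - 1/y - (y - 1))) (at y)"
      using y0 by (auto intro!: derivative_eq_intros simp: field_simps power2_eq_square)
    moreover have "1 - 1/y - (y - 1) = - ((y - 1)^2 / y)" using y0 by (simp add: field_simps power2_eq_square)
    moreover have "(y - 1)^2 / y \<ge> 0" using y0 by simp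
    ultimately show "\<exists>d. (?h has_real_derivative d) (at y) \<and> d \<le> 0" by force
  qed
  then have "(x - 1)^2 / 2 \<le> x - 1 - ln x" by simp
  moreover have "(x - 1)^2 / (2 * M) \<le> (x - 1)^2 / 2"
    using M by (intro divide_left_mono) auto
  ultimately show ?thesis by linarith
next
  case False
  let ?h = "\<lambda>y::real. y - 1 - ln y - (y - 1)^2 / (2 * M)"
  have "?h 1 \<le> ?h x"
  proof (rule DERIV_nonneg_imp_nondecreasing[of 1 x ?h])
    show "1 \<le> x" using False by simp
  next
    fix y assume y: "1 \<le> y" "y \<le> x"
    then have y0: "y > 0" by simp
    have "(?h has_real_derivative (1 - 1/y - (y - 1) / M)) (at y)"
      using y0 M by (auto intro!: derivative_eq_intros simp: field_simps power2_eq_square)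
    moreover have "1 - 1/y - (y - 1) / M = (y - 1) * (M - y) / (y * M)" using y0 M by (simp add: field_simps)
    moreover have "(y - 1) * (M - y) / (y * M) \<ge> 0" using y0 M y x by (intro divide_nonneg_nonneg mult_nonneg_nonneg) auto
    ultimately show "\<exists>d. (?h has_real_derivative d) (at y) \<and> d \<ge> 0" by force
  qed
  then show ?thesis by simp
qed

lemma amgm3:
  fixes x y z :: real
  assumes "0 < x" "0 < y" "0 < z" "x * y * z = 1"
  shows "3 \<le> x + y + z"
proof -
  have "ln x + ln y + ln z = ln (x * y * z)" using assms ln_mult[of "x*y" z] ln_mult[of x y] by simp
  then have "ln x + ln y + ln z = 0" using assms by simp
  moreover have "ln x \<le> x - 1" "ln y \<le> y - 1" "ln z \<le> z - 1" using assms by (auto intro: ln_le_minus_one)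
  ultimately show ?thesis by linarith
qed


lemma lyap_id:
  fixes S I C A Ss Is Cs As b1 eC eA al om m :: real
  assumes "S > 0" "I > 0" "C > 0" "A > 0" "Ss > 0" "Is > 0" "Cs > 0" "As > 0"
  shows "(1 - Ss/S) * (b1*(Is+eC*Cs+eA*As)*Ss + m*Ss - b1*(I+eC*C+eA*A)*S - m*S)
 + (1 - Is/I) * (b1*(I+eC*C+eA*A)*S - (b1*(Is+eC*Cs+eA*As)*Ss + al*As + om*Cs)/Is * I + al*A + om*C)
 + (eC*b1*Ss + om)*(1 - Cs/C)*(Cs*I/Is - C)
 + (eA*b1*Ss + al)*(1 - As/A)*(As*I/Is - A)
 = - m*(S-Ss)^2/S - b1*Is*(S-Ss)^2/S
   + eC*b1*Ss*Cs*(3 - Ss/S - S*C*Is/(Ss*Cs*I) - I*Cs/(Is*C))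
   + eA*b1*Ss*As*(3 - Ss/S - S*A*Is/(Ss*As*I) - I*As/(Is*A))
   - om*(C*Is - Cs*I)^2/(Is*C*I) - al*(A*Is - As*I)^2/(Is*A*I)"
  using assms by (simp add: field_simps power2_eq_square)


locale hiv =
  fixes Lam mu beta rho phi alpha omega psi etaC etaA :: real
  assumes Lam: "Lam > 0" and mu: "mu > 0" and beta: "beta > 0" and rho: "rho > 0"
    and phi: "phi > 0" and alpha: "alpha > 0" and omega: "omega > 0" and psi: "psi \<ge> 0"
    and etaC: "etaC > 0" and etaA: "etaA > 0"
    and R0gt: "R0 Lam mu beta rho phi alpha omega psi etaC etaA > 1"
begin

definition "b1 = beta * mu / Lam"
definition "xi1 = alpha + mu"
definition "xi2 = omega + mu"
definition "xi3 = rho + phi + mu"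
definition "NN = xi1 * (phi + xi2) + rho * xi2"
definition "DD = xi1 * (xi2 + etaC * phi) + etaA * rho * xi2"
definition "Ss = mu * (xi1 * (phi + xi2) + rho * xi2) / (b1 * (xi1 * (xi2 + etaC * phi) + etaA * rho * xi2))"
definition "kk = NN / (xi1 * xi2)"
definition "Is = (Lam - (mu + psi) * Ss) / (mu * kk)"
definition "Cs = phi * Is / xi2"
definition "As = rho * Is / xi1"
definition "Es = psi * Ss / mu"
definition "Ts = Is + etaC * Cs + etaA * As"
definition "Bx = Lam / mu"

abbreviation "FF \<equiv> hiv_rhs Lam mu beta rho phi alpha omega psi etaC etaA"

lemma b1_pos: "b1 > 0" and xi_pos: "xi1 > 0" "xi2 > 0" "xi3 > 0"
  using Lam mu beta rho phi alpha omega by (auto simp: b1_def xi1_def xi2_def xi3_def)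

lemma NN_pos: "NN > 0" and DD_pos: "DD > 0"
  using xi_pos etaC etaA rho phi unfolding NN_def DD_def by (auto intro!: add_pos_pos mult_pos_pos)

lemma kk_pos: "kk > 0" using NN_pos xi_pos by (simp add: kk_def)

lemma Ss_eq: "Ss = mu * NN / (b1 * DD)" by (simp add: Ss_def NN_def DD_def)

lemma Ss_pos: "Ss > 0"
  using b1_pos NN_pos DD_pos mu unfolding Ss_eq by simp

lemma R0_eq: "R0 Lam mu beta rho phi alpha omega psi etaC etaA = Lam / ((mu + psi) * Ss)"
proof -
  have "R0 Lam mu beta rho phi alpha omega psi etaC etaA
     = Lam * b1 * (xi2 * (xi1 + rho * etaA) + etaC * phi * xi1) / ((mu + psi) * mu * (xi2 * (rho + xi1) + phi * xi1))"
    by (simp add: R0_def Let_def b1_def xi1_def xi2_def)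
  also have "xi2 * (xi1 + rho * etaA) + etaC * phi * xi1 = DD" by (simp add: DD_def algebra_simps)
  also have "xi2 * (rho + xi1) + phi * xi1 = NN" by (simp add: NN_def algebra_simps)
  finally show ?thesis
    unfolding Ss_eq using b1_pos NN_pos DD_pos mu psi by (simp add: field_simps)
qed

lemma Lam_gt: "Lam > (mu + psi) * Ss"
proof -
  have "(mu + psi) * Ss > 0" using mu psi Ss_pos by simp
  with R0gt R0_eq show ?thesis by (simp add: field_simps)
qed

lemma Is_pos: "Is > 0" using Lam_gt mu kk_pos by (simp add: Is_def)
lemma Cs_pos: "Cs > 0" using Is_pos phi xi_pos by (simp add: Cs_def)
lemma As_pos: "As > 0" using Is_pos rho xi_pos by (simp add: As_def)
lemma Es_nn: "Es \<ge> 0" using psi Ss_pos mu by (simp add: Es_def)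
lemma Ts_pos: "Ts > 0" using Is_pos Cs_pos As_pos etaC etaA by (simp add: Ts_def add_pos_pos)
lemma Bx_pos: "Bx > 0" using Lam mu by (simp add: Bx_def)

lemma Ts_eq: "Ts = Is * DD / (xi1 * xi2)"
  using xi_pos by (simp add: Ts_def Cs_def As_def DD_def field_simps)

lemma b1TsSs: "b1 * Ts * Ss = mu * kk * Is"
  unfolding Ts_eq Ss_eq kk_def using DD_pos xi_pos b1_pos by (simp add: field_simps)

lemma R1: "Lam = b1 * Ts * Ss + (mu + psi) * Ss"
  using b1TsSs mu kk_pos by (simp add: Is_def)

lemma R2: "xi3 * Is = b1 * Ts * Ss + alpha * As + omega * Cs"
proof -
  have h: "xi3 * xi1 * xi2 = mu * NN + alpha * rho * xi2 + omega * phi * xi1"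
    by (simp add: NN_def xi1_def xi2_def xi3_def algebra_simps)
  have "xi3 * Is = (xi3 * xi1 * xi2) * Is / (xi1 * xi2)" using xi_pos by simp
  also have "\<dots> = (mu * NN + alpha * rho * xi2 + omega * phi * xi1) * Is / (xi1 * xi2)" by (simp only: h)
  also have "\<dots> = b1 * Ts * Ss + alpha * As + omega * Cs"
    unfolding b1TsSs kk_def As_def Cs_def using xi_pos by (simp add: field_simps)
  finally show ?thesis .
qed

lemma R3: "phi * Is = xi2 * Cs" using xi_pos by (simp add: Cs_def)
lemma R4: "rho * Is = xi1 * As" using xi_pos by (simp add: As_def)
lemma R5: "psi * Ss = mu * Es" using mu by (simp add: Es_def)

lemma rhs_eq: "FF (S, I, C, A, E) =
   (Lam - b1 * (I + etaC * C + etaA * A) * S - (mu + psi) * S,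
    b1 * (I + etaC * C + etaA * A) * S - xi3 * I + alpha * A + omega * C,
    phi * I - xi2 * C, rho * I - xi1 * A, psi * S - mu * E)"
  by (simp add: hiv_rhs_def b1_def xi1_def xi2_def xi3_def Let_def)

definition "peq = (Ss, Is, Cs, As, Es)"

lemma peq_eq: "FF peq = 0"
  unfolding peq_def rhs_eq zero_prod_def
  using R1 R2 R3 R4 R5 by (simp add: Ts_def algebra_simps)

lemma peq_unique:
  assumes "FF (S, I, C, A, E) = 0" "I > 0"
  shows "(S, I, C, A, E) = peq"
proof -
  from assms(1) have e1: "Lam - b1 * (I + etaC * C + etaA * A) * S - (mu + psi) * S = 0"
    and e2: "b1 * (I + etaC * C + etaA * A) * S - xi3 * I + alpha * A + omega * C = 0"
    and e3: "phi * I - xi2 * C = 0" and e4: "rho * I - xi1 * A = 0" and e5: "psi * S - mu * E = 0"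
    unfolding rhs_eq zero_prod_def by auto
  have "C = phi * I / xi2" using e3 xi_pos by (simp add: field_simps)
  then have C: "C = Cs * I / Is" using Is_pos by (simp add: Cs_def)
  have "A = rho * I / xi1" using e4 xi_pos by (simp add: field_simps)
  then have A: "A = As * I / Is" using Is_pos by (simp add: As_def)
  have T: "I + etaC * C + etaA * A = Ts * I / Is"
    unfolding C A Ts_def using Is_pos by (simp add: field_simps)
  have "b1 * (I + etaC * C + etaA * A) * S = xi3 * I - alpha * A - omega * C" using e2 by simp
  also have "\<dots> = (xi3 * Is - alpha * As - omega * Cs) * I / Is"
    unfolding C A using Is_pos by (simp add: field_simps)
  also have "\<dots> = b1 * Ts * Ss * I / Is" using R2 by simp
  finally have "b1 * (Ts * I / Is) * S = b1 * Ts * Ss * I / Is" unfolding T .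
  then have S: "S = Ss" using b1_pos Ts_pos Is_pos assms(2) by (simp add: field_simps)
  have "b1 * (Ts * I / Is) * Ss = b1 * Ts * Ss" using e1 R1 T S by simp
  then have I: "I = Is" using b1_pos Ts_pos Is_pos Ss_pos by (simp add: field_simps)
  show ?thesis using I S C A e5 R5 mu Is_pos unfolding peq_def by (auto simp: field_simps)
qed

end


context hiv begin
definition "fS S I C A = Lam - b1 * (I + etaC * C + etaA * A) * S - (mu + psi) * S"
definition "fI S I C A = b1 * (I + etaC * C + etaA * A) * S - xi3 * I + alpha * A + omega * C"
definition "fC I C = phi * I - xi2 * C"
definition "fA I A = rho * I - xi1 * A"
definition "fE S E = psi * S - mu * E"
lemma rhs_eq2: "FF (S, I, C, A, E) = (fS S I C A, fI S I C A, fC I C, fA I A, fE S E)"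
  by (simp add: rhs_eq fS_def fI_def fC_def fA_def fE_def)
end

lemma nfst: "norm (fst z) \<le> norm z"
  using norm_fst_le[of "fst z" "snd z"] by simp
lemma nsnd: "norm (snd z) \<le> norm z"
  using norm_snd_le[of "snd z" "fst z"] by simp

lemma negpart_self: "min u 0 * u = (min u 0)^2" for u::real
  by (simp add: min_def power2_eq_square)

lemma two_mult_le: "2 * a * b \<le> a^2 + b^2" for a b :: real
proof -
  have "0 \<le> (a - b)^2" by simp
  then show ?thesis by (simp add: power2_diff algebra_simps)
qed

lemma negpart_prod:
  fixes u v c :: real
  assumes c: "c \<ge> 0"
  shows "2 * c * min u 0 * v \<le> c * ((min u 0)^2 + (min v 0)^2)"
proof -
  have "min u 0 * v \<le> min u 0 * min v 0" by (rule mult_left_mono_neg) auto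
  then have "2 * (min u 0 * v) \<le> (min u 0)^2 + (min v 0)^2"
    using two_mult_le[of "min u 0" "min v 0"] by linarith
  then have "c * (2 * (min u 0 * v)) \<le> c * ((min u 0)^2 + (min v 0)^2)"
    by (rule mult_left_mono[OF _ c])
  then show ?thesis by (simp add: algebra_simps)
qed

lemma ineqS:
  fixes m S a K L :: real
  assumes "m \<le> 0" "\<bar>a\<bar> \<le> K" "L \<ge> 0"
  shows "2 * min S 0 * (L - a * S) \<le> 2 * K * (min S 0)^2"
proof -
  have m: "min S 0 \<le> 0" by simp
  have "2 * min S 0 * (L - a * S) = 2 * min S 0 * L - 2 * a * (min S 0 * S)" by (simp add: algebra_simps)
  also have "\<dots> = 2 * min S 0 * L - 2 * a * (min S 0)^2" by (simp add: negpart_self)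
  also have "\<dots> \<le> - 2 * a * (min S 0)^2" using m assms(3) by (simp add: mult_nonpos_nonneg)
  also have "\<dots> \<le> 2 * K * (min S 0)^2"
  proof -
    have "- a \<le> K" using assms(2) by linarith
    then show ?thesis by (intro mult_right_mono) auto
  qed
  finally show ?thesis .
qed

locale hivsol = hiv +
  fixes x :: "real \<Rightarrow> state5"
  assumes sol: "is_solution FF x" and x0: "x 0 \<in> OmegaP Lam mu psi"
begin

definition "xS t = fst (x t)"
definition "xI t = fst (snd (x t))"
definition "xC t = fst (snd (snd (x t)))"
definition "xA t = fst (snd (snd (snd (x t))))"
definition "xE t = snd (snd (snd (snd (x t))))"

lemma x_eq: "x t = (xS t, xI t, xC t, xA t, xE t)"
  by (simp add: xS_def xI_def xC_def xA_def xE_def)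

lemma FFx: "FF (x t) = (fS (xS t) (xI t) (xC t) (xA t), fI (xS t) (xI t) (xC t) (xA t),
   fC (xI t) (xC t), fA (xI t) (xA t), fE (xS t) (xE t))"
  by (subst x_eq) (rule rhs_eq2)

lemma vd: "t \<ge> 0 \<Longrightarrow> (x has_vector_derivative FF (x t)) (at t within {0..})"
  using sol unfolding is_solution_def by auto

lemma dSw: "t \<ge> 0 \<Longrightarrow> (xS has_real_derivative fS (xS t) (xI t) (xC t) (xA t)) (at t within {0..})"
proof -
  assume t: "t \<ge> 0"
  have "((\<lambda>t. fst (x t)) has_real_derivative fst (FF (x t))) (at t within {0..})"
    by (rule vd_fst[OF vd[OF t]])
  moreover have "(\<lambda>t. fst (x t)) = xS" by (simp add: fun_eq_iff xS_def)
  ultimately show ?thesis by (simp add: FFx)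
qed

lemma dIw: "t \<ge> 0 \<Longrightarrow> (xI has_real_derivative fI (xS t) (xI t) (xC t) (xA t)) (at t within {0..})"
proof -
  assume t: "t \<ge> 0"
  have "((\<lambda>t. fst (snd (x t))) has_real_derivative fst (snd (FF (x t)))) (at t within {0..})"
    by (rule vd_fst[OF vd_snd[OF vd[OF t]]])
  moreover have "(\<lambda>t. fst (snd (x t))) = xI" by (simp add: fun_eq_iff xI_def)
  ultimately show ?thesis by (simp add: FFx)
qed

lemma dCw: "t \<ge> 0 \<Longrightarrow> (xC has_real_derivative fC (xI t) (xC t)) (at t within {0..})"
proof -
  assume t: "t \<ge> 0"
  have "((\<lambda>t. fst (snd (snd (x t)))) has_real_derivative fst (snd (snd (FF (x t))))) (at t within {0..})"
    by (rule vd_fst[OF vd_snd[OF vd_snd[OF vd[OF t]]]])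
  moreover have "(\<lambda>t. fst (snd (snd (x t)))) = xC" by (simp add: fun_eq_iff xC_def)
  ultimately show ?thesis by (simp add: FFx)
qed

lemma dAw: "t \<ge> 0 \<Longrightarrow> (xA has_real_derivative fA (xI t) (xA t)) (at t within {0..})"
proof -
  assume t: "t \<ge> 0"
  have "((\<lambda>t. fst (snd (snd (snd (x t))))) has_real_derivative fst (snd (snd (snd (FF (x t)))))) (at t within {0..})"
    by (rule vd_fst[OF vd_snd[OF vd_snd[OF vd_snd[OF vd[OF t]]]]])
  moreover have "(\<lambda>t. fst (snd (snd (snd (x t))))) = xA" by (simp add: fun_eq_iff xA_def)
  ultimately show ?thesis by (simp add: FFx)
qed

lemma dEw: "t \<ge> 0 \<Longrightarrow> (xE has_real_derivative fE (xS t) (xE t)) (at t within {0..})"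
proof -
  assume t: "t \<ge> 0"
  have "((\<lambda>t. snd (snd (snd (snd (x t))))) has_real_derivative snd (snd (snd (snd (FF (x t)))))) (at t within {0..})"
    by (rule vd_snd_real[OF vd_snd[OF vd_snd[OF vd_snd[OF vd[OF t]]]]])
  moreover have "(\<lambda>t. snd (snd (snd (snd (x t))))) = xE" by (simp add: fun_eq_iff xE_def)
  ultimately show ?thesis by (simp add: FFx)
qed

lemma dS: "t > 0 \<Longrightarrow> (xS has_real_derivative fS (xS t) (xI t) (xC t) (xA t)) (at t)"
  by (rule within_to_at[OF dSw]) auto
lemma dI: "t > 0 \<Longrightarrow> (xI has_real_derivative fI (xS t) (xI t) (xC t) (xA t)) (at t)"
  by (rule within_to_at[OF dIw]) auto
lemma dC: "t > 0 \<Longrightarrow> (xC has_real_derivative fC (xI t) (xC t)) (at t)"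
  by (rule within_to_at[OF dCw]) auto
lemma dA: "t > 0 \<Longrightarrow> (xA has_real_derivative fA (xI t) (xA t)) (at t)"
  by (rule within_to_at[OF dAw]) auto
lemma dE: "t > 0 \<Longrightarrow> (xE has_real_derivative fE (xS t) (xE t)) (at t)"
  by (rule within_to_at[OF dEw]) auto

lemma contS: "continuous_on {0..} xS" by (rule within_cont[OF dSw])
lemma contI: "continuous_on {0..} xI" by (rule within_cont[OF dIw])
lemma contC: "continuous_on {0..} xC" by (rule within_cont[OF dCw])
lemma contA: "continuous_on {0..} xA" by (rule within_cont[OF dAw])
lemma contE: "continuous_on {0..} xE" by (rule within_cont[OF dEw])

lemma init: "xS 0 \<ge> 0" "xI 0 \<ge> 0" "xC 0 \<ge> 0" "xA 0 \<ge> 0" "xE 0 \<ge> 0"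
  "xS 0 + xI 0 + xC 0 + xA 0 + xE 0 \<le> Lam / mu"
  using x0 unfolding OmegaP_def by (subst (asm) x_eq, simp)+

lemma contx: "continuous_on {0..} x"
  unfolding continuous_on_eq_continuous_within
  using vd by (auto intro: has_vector_derivative_continuous)

lemma loc_bound: "\<exists>B\<ge>0. \<forall>t\<in>{0..b}. \<bar>xS t\<bar> \<le> B \<and> \<bar>xI t\<bar> \<le> B \<and> \<bar>xC t\<bar> \<le> B \<and> \<bar>xA t\<bar> \<le> B \<and> \<bar>xE t\<bar> \<le> B"
proof -
  have "continuous_on {0..b} x" using contx by (rule continuous_on_subset) auto
  then have "compact (x ` {0..b})" by (rule compact_continuous_image) simp
  then have "bounded (x ` {0..b})" by (rule compact_imp_bounded)
  then obtain B where B: "\<And>y. y \<in> x ` {0..b} \<Longrightarrow> norm y \<le> B" unfolding bounded_iff by blast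
  have "\<forall>t\<in>{0..b}. \<bar>xS t\<bar> \<le> max B 0 \<and> \<bar>xI t\<bar> \<le> max B 0 \<and> \<bar>xC t\<bar> \<le> max B 0 \<and> \<bar>xA t\<bar> \<le> max B 0 \<and> \<bar>xE t\<bar> \<le> max B 0"
  proof
    fix t assume t: "t \<in> {0..b}"
    have nx: "norm (x t) \<le> B" using B t by auto
    have 1: "\<bar>xS t\<bar> \<le> norm (x t)" unfolding xS_def using nfst[of "x t"] by simp
    have n2: "norm (snd (x t)) \<le> norm (x t)" by (rule nsnd)
    have n3: "norm (snd (snd (x t))) \<le> norm (x t)" using nsnd[of "snd (x t)"] n2 by linarith
    have n4: "norm (snd (snd (snd (x t)))) \<le> norm (x t)" using nsnd[of "snd (snd (x t))"] n3 by linarith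
    have 2: "\<bar>xI t\<bar> \<le> norm (x t)" unfolding xI_def using nfst[of "snd (x t)"] n2 by simp
    have 3: "\<bar>xC t\<bar> \<le> norm (x t)" unfolding xC_def using nfst[of "snd (snd (x t))"] n3 by simp
    have 4: "\<bar>xA t\<bar> \<le> norm (x t)" unfolding xA_def using nfst[of "snd (snd (snd (x t)))"] n4 by simp
    have 5: "\<bar>xE t\<bar> \<le> norm (x t)" unfolding xE_def using nsnd[of "snd (snd (snd (x t)))"] n4 by simp
    show "\<bar>xS t\<bar> \<le> max B 0 \<and> \<bar>xI t\<bar> \<le> max B 0 \<and> \<bar>xC t\<bar> \<le> max B 0 \<and> \<bar>xA t\<bar> \<le> max B 0 \<and> \<bar>xE t\<bar> \<le> max B 0"
      using 1 2 3 4 5 nx by linarith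
  qed
  then show ?thesis by (intro exI[of _ "max B 0"]) auto
qed

end

lemma mono_from_deriv:
  fixes f f' :: "real \<Rightarrow> real"
  assumes c: "continuous_on {0..} f" and d: "\<And>s. s > 0 \<Longrightarrow> (f has_real_derivative f' s) (at s)"
    and n: "\<And>s. s > 0 \<Longrightarrow> f' s \<ge> 0" and ab: "0 \<le> a" "a \<le> b"
  shows "f a \<le> f b"
proof (rule DERIV_nonneg_imp_increasing_open[OF ab(2)])
  fix s assume "a < s" "s < b"
  then have "s > 0" using ab by simp
  then show "\<exists>y. (f has_real_derivative y) (at s) \<and> y \<ge> 0" using d n by blast
next
  show "continuous_on {a..b} f" using c ab by (auto elim: continuous_on_subset)
qed

lemma strict_from_deriv:
  fixes f f' :: "real \<Rightarrow> real"
  assumes c: "continuous_on {0..} f" and d: "\<And>s. s > 0 \<Longrightarrow> (f has_real_derivative f' s) (at s)"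
    and n: "\<And>s. s > 0 \<Longrightarrow> f' s > 0" and ab: "0 \<le> a" "a < b"
  shows "f a < f b"
proof (rule DERIV_pos_imp_increasing_open[OF ab(2)])
  fix s assume "a < s" "s < b"
  then have "s > 0" using ab by simp
  then show "\<exists>y. (f has_real_derivative y) (at s) \<and> y > 0" using d n by blast
next
  show "continuous_on {a..b} f" using c ab by (auto elim: continuous_on_subset)
qed

lemma antimono_from_deriv:
  fixes f f' :: "real \<Rightarrow> real"
  assumes c: "continuous_on {0..} f" and d: "\<And>s. s > 0 \<Longrightarrow> (f has_real_derivative f' s) (at s)"
    and n: "\<And>s. s > 0 \<Longrightarrow> f' s \<le> 0" and ab: "0 \<le> a" "a \<le> b"
  shows "f b \<le> f a"
proof (rule DERIV_nonpos_imp_decreasing_open[OF ab(2)])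
  fix s assume "a < s" "s < b"
  then have "s > 0" using ab by simp
  then show "\<exists>y. (f has_real_derivative y) (at s) \<and> y \<le> 0" using d n by blast
next
  show "continuous_on {a..b} f" using c ab by (auto elim: continuous_on_subset)
qed

context hiv begin

lemma abs_T: assumes "\<bar>I\<bar> \<le> B" "\<bar>C\<bar> \<le> B" "\<bar>A\<bar> \<le> B"
  shows "\<bar>I + etaC * C + etaA * A\<bar> \<le> (1 + etaC + etaA) * B"
proof -
  have "\<bar>I + etaC * C + etaA * A\<bar> \<le> \<bar>I\<bar> + etaC * \<bar>C\<bar> + etaA * \<bar>A\<bar>"
  proof -
    have "\<bar>etaC * C\<bar> = etaC * \<bar>C\<bar>" "\<bar>etaA * A\<bar> = etaA * \<bar>A\<bar>" using etaC etaA by (simp_all add: abs_mult)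
    then show ?thesis using abs_triangle_ineq[of I "etaC*C"] abs_triangle_ineq[of "I+etaC*C" "etaA*A"] by linarith
  qed
  also have "\<dots> \<le> B + etaC * B + etaA * B"
    using assms etaC etaA by (intro add_mono mult_left_mono) auto
  finally show ?thesis by (simp add: algebra_simps)
qed

lemma fS_alt: "fS S I C A = Lam - (b1 * (I + etaC * C + etaA * A) + mu + psi) * S"
  by (simp add: fS_def algebra_simps)

lemma sum_f: "fS S I C A + fI S I C A + fC I C + fA I A + fE S E = Lam - mu * (S + I + C + A + E)"
  by (simp add: fS_def fI_def fC_def fA_def fE_def xi1_def xi2_def xi3_def algebra_simps)

definition "KK B = 2 * (b1 * B + xi3) + (b1 * B * etaC + omega) + (b1 * B * etaA + alpha) + phi + rho"

lemma ica_ineq: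
  assumes S: "0 \<le> S" "S \<le> B"
  shows "2 * min I 0 * fI S I C A + 2 * min C 0 * fC I C + 2 * min A 0 * fA I A
     \<le> KK B * ((min I 0)^2 + (min C 0)^2 + (min A 0)^2)"
proof -
  let ?mI = "min I 0" and ?mC = "min C 0" and ?mA = "min A 0"
  define cC where "cC = b1 * S * etaC + omega"
  define cA where "cA = b1 * S * etaA + alpha"
  define cCm where "cCm = b1 * B * etaC + omega"
  define cAm where "cAm = b1 * B * etaA + alpha"
  have cC0: "cC \<ge> 0" and cA0: "cA \<ge> 0" using b1_pos S etaC etaA omega alpha
    by (auto simp: cC_def cA_def)
  have cCle: "cC \<le> cCm" and cAle: "cA \<le> cAm" using b1_pos S etaC etaA
    by (auto simp: cC_def cA_def cCm_def cAm_def intro!: mult_right_mono mult_left_mono)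
  have B0: "B \<ge> 0" using S by simp
  have fIe: "fI S I C A = (b1 * S - xi3) * I + cC * C + cA * A"
    by (simp add: fI_def cC_def cA_def algebra_simps)
  have q1: "2 * ?mI * fI S I C A \<le> 2 * (b1 * B + xi3) * ?mI^2 + cCm * (?mI^2 + ?mC^2) + cAm * (?mI^2 + ?mA^2)"
  proof -
    have "2 * ?mI * fI S I C A = 2 * (b1 * S - xi3) * (?mI * I) + 2 * cC * ?mI * C + 2 * cA * ?mI * A"
      unfolding fIe by (simp add: algebra_simps)
    also have "\<dots> = 2 * (b1 * S - xi3) * ?mI^2 + 2 * cC * ?mI * C + 2 * cA * ?mI * A"
      by (simp add: negpart_self)
    also have "\<dots> \<le> 2 * (b1 * B + xi3) * ?mI^2 + cC * (?mI^2 + ?mC^2) + cA * (?mI^2 + ?mA^2)"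
    proof (intro add_mono)
      have "b1 * S - xi3 \<le> b1 * B + xi3" using b1_pos S xi_pos by (smt (verit) mult_left_mono)
      then show "2 * (b1 * S - xi3) * ?mI^2 \<le> 2 * (b1 * B + xi3) * ?mI^2"
        by (intro mult_right_mono) auto
      show "2 * cC * ?mI * C \<le> cC * (?mI^2 + ?mC^2)" by (rule negpart_prod[OF cC0])
      show "2 * cA * ?mI * A \<le> cA * (?mI^2 + ?mA^2)" by (rule negpart_prod[OF cA0])
    qed
    also have "\<dots> \<le> 2 * (b1 * B + xi3) * ?mI^2 + cCm * (?mI^2 + ?mC^2) + cAm * (?mI^2 + ?mA^2)"
      using cCle cAle B0 b1_pos xi_pos by (intro add_mono mult_right_mono) auto
    finally show ?thesis .
  qed
  have q2: "2 * ?mC * fC I C \<le> phi * (?mC^2 + ?mI^2)"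
  proof -
    have "2 * ?mC * fC I C = 2 * phi * ?mC * I - 2 * xi2 * (?mC * C)" by (simp add: fC_def algebra_simps)
    also have "\<dots> = 2 * phi * ?mC * I - 2 * xi2 * ?mC^2" by (simp add: negpart_self)
    also have "\<dots> \<le> 2 * phi * ?mC * I" using xi_pos by simp
    also have "\<dots> \<le> phi * (?mC^2 + ?mI^2)" by (rule negpart_prod) (use phi in simp)
    finally show ?thesis .
  qed
  have q3: "2 * ?mA * fA I A \<le> rho * (?mA^2 + ?mI^2)"
  proof -
    have "2 * ?mA * fA I A = 2 * rho * ?mA * I - 2 * xi1 * (?mA * A)" by (simp add: fA_def algebra_simps)
    also have "\<dots> = 2 * rho * ?mA * I - 2 * xi1 * ?mA^2" by (simp add: negpart_self)
    also have "\<dots> \<le> 2 * rho * ?mA * I" using xi_pos by simp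
    also have "\<dots> \<le> rho * (?mA^2 + ?mI^2)" by (rule negpart_prod) (use rho in simp)
    finally show ?thesis .
  qed
  have KK: "KK B = 2 * (b1 * B + xi3) + cCm + cAm + phi + rho" by (simp add: KK_def cCm_def cAm_def)
  have pos: "b1 * B + xi3 \<ge> 0" "cCm \<ge> 0" "cAm \<ge> 0"
    using b1_pos B0 xi_pos etaC etaA omega alpha by (auto simp: cCm_def cAm_def)
  have "2 * (b1 * B + xi3) * ?mI^2 + cCm * (?mI^2 + ?mC^2) + cAm * (?mI^2 + ?mA^2)
        + phi * (?mC^2 + ?mI^2) + rho * (?mA^2 + ?mI^2)
      = (2 * (b1 * B + xi3) + cCm + cAm + phi + rho) * ?mI^2 + (cCm + phi) * ?mC^2 + (cAm + rho) * ?mA^2"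
    by (simp add: algebra_simps)
  also have "\<dots> \<le> KK B * ?mI^2 + KK B * ?mC^2 + KK B * ?mA^2"
  proof (intro add_mono)
    show "(2 * (b1 * B + xi3) + cCm + cAm + phi + rho) * ?mI^2 \<le> KK B * ?mI^2" by (simp add: KK)
    have "cCm + phi \<le> KK B" unfolding KK using pos phi rho by (smt (verit))
    then show "(cCm + phi) * ?mC^2 \<le> KK B * ?mC^2" by (rule mult_right_mono) simp
    have "cAm + rho \<le> KK B" unfolding KK using pos phi rho by (smt (verit))
    then show "(cAm + rho) * ?mA^2 \<le> KK B * ?mA^2" by (rule mult_right_mono) simp
  qed
  finally have tot: "2 * (b1 * B + xi3) * ?mI^2 + cCm * (?mI^2 + ?mC^2) + cAm * (?mI^2 + ?mA^2)
        + phi * (?mC^2 + ?mI^2) + rho * (?mA^2 + ?mI^2) \<le> KK B * ?mI^2 + KK B * ?mC^2 + KK B * ?mA^2" .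
  have "KK B * (?mI^2 + ?mC^2 + ?mA^2) = KK B * ?mI^2 + KK B * ?mC^2 + KK B * ?mA^2"
    by (simp add: distrib_left)
  then show ?thesis using q1 q2 q3 tot by linarith
qed

end

context hivsol begin

lemma S_nn: "t \<ge> 0 \<Longrightarrow> xS t \<ge> 0"
proof -
  assume t: "t \<ge> 0"
  obtain B where B0: "B \<ge> 0" and B: "\<forall>s\<in>{0..t}. \<bar>xS s\<bar> \<le> B \<and> \<bar>xI s\<bar> \<le> B \<and> \<bar>xC s\<bar> \<le> B \<and> \<bar>xA s\<bar> \<le> B \<and> \<bar>xE s\<bar> \<le> B"
    using loc_bound[of t] by blast
  define K where "K = b1 * (1 + etaC + etaA) * B + mu + psi"
  have "(\<lambda>s. (min (xS s) 0)^2) t = 0"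
  proof (rule gronwall0[where q="\<lambda>s. (min (xS s) 0)^2" and q'="\<lambda>s. 2 * min (xS s) 0 * fS (xS s) (xI s) (xC s) (xA s)" and K="2*K" and b=t])
    have "continuous_on {0..t} xS" by (rule continuous_on_subset[OF contS]) auto
    then show "continuous_on {0..t} (\<lambda>s. (min (xS s) 0)^2)" by (intro continuous_intros)
    fix s assume s: "0 < s" "s < t"
    show "((\<lambda>s. (min (xS s) 0)^2) has_real_derivative 2 * min (xS s) 0 * fS (xS s) (xI s) (xC s) (xA s)) (at s)"
      by (rule negsq_deriv[OF dS]) (use s in simp)
    have bs: "\<bar>xI s\<bar> \<le> B" "\<bar>xC s\<bar> \<le> B" "\<bar>xA s\<bar> \<le> B" using B s by auto
    have "\<bar>b1 * (xI s + etaC * xC s + etaA * xA s) + mu + psi\<bar> \<le> b1 * \<bar>xI s + etaC * xC s + etaA * xA s\<bar> + mu + psi"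
    proof -
      have "\<bar>b1 * (xI s + etaC * xC s + etaA * xA s)\<bar> = b1 * \<bar>xI s + etaC * xC s + etaA * xA s\<bar>"
        using b1_pos by (simp add: abs_mult)
      then show ?thesis using abs_triangle_ineq[of "b1 * (xI s + etaC * xC s + etaA * xA s)" "mu + psi"] mu psi
        by (simp add: add.assoc)
    qed
    also have "\<dots> \<le> K" unfolding K_def using abs_T[OF bs] b1_pos by (simp add: mult.assoc mult_left_mono)
    finally have aK: "\<bar>b1 * (xI s + etaC * xC s + etaA * xA s) + mu + psi\<bar> \<le> K" .
    show "2 * min (xS s) 0 * fS (xS s) (xI s) (xC s) (xA s) \<le> 2 * K * (min (xS s) 0)^2"
      unfolding fS_alt by (rule ineqS[OF _ aK]) (use Lam in auto)
  qed (use init t in auto)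
  then have "min (xS t) 0 = 0" by simp
  then show ?thesis by (metis min.absorb_iff2 nle_le)
qed

lemma ICA_nn: "t \<ge> 0 \<Longrightarrow> xI t \<ge> 0 \<and> xC t \<ge> 0 \<and> xA t \<ge> 0"
proof -
  assume t: "t \<ge> 0"
  obtain B where B0: "B \<ge> 0" and B: "\<forall>s\<in>{0..t}. \<bar>xS s\<bar> \<le> B \<and> \<bar>xI s\<bar> \<le> B \<and> \<bar>xC s\<bar> \<le> B \<and> \<bar>xA s\<bar> \<le> B \<and> \<bar>xE s\<bar> \<le> B"
    using loc_bound[of t] by blast
  have "(\<lambda>s. (min (xI s) 0)^2 + (min (xC s) 0)^2 + (min (xA s) 0)^2) t = 0"
  proof (rule gronwall0[where q="\<lambda>s. (min (xI s) 0)^2 + (min (xC s) 0)^2 + (min (xA s) 0)^2" and q'="\<lambda>s. 2 * min (xI s) 0 * fI (xS s) (xI s) (xC s) (xA s)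
       + 2 * min (xC s) 0 * fC (xI s) (xC s) + 2 * min (xA s) 0 * fA (xI s) (xA s)" and K="KK B" and b=t])
    have "continuous_on {0..t} xI" "continuous_on {0..t} xC" "continuous_on {0..t} xA"
      by (rule continuous_on_subset[OF contI] continuous_on_subset[OF contC] continuous_on_subset[OF contA], auto)+
    then show "continuous_on {0..t} (\<lambda>s. (min (xI s) 0)^2 + (min (xC s) 0)^2 + (min (xA s) 0)^2)"
      by (intro continuous_intros)
    fix s assume s: "0 < s" "s < t"
    show "((\<lambda>s. (min (xI s) 0)^2 + (min (xC s) 0)^2 + (min (xA s) 0)^2) has_real_derivative
        2 * min (xI s) 0 * fI (xS s) (xI s) (xC s) (xA s)
       + 2 * min (xC s) 0 * fC (xI s) (xC s) + 2 * min (xA s) 0 * fA (xI s) (xA s)) (at s)"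
      by (intro DERIV_add negsq_deriv dI dC dA) (use s in auto)
    have "\<bar>xS s\<bar> \<le> B" using B s by auto
    then have "0 \<le> xS s" "xS s \<le> B" using S_nn[of s] s by auto
    then show "2 * min (xI s) 0 * fI (xS s) (xI s) (xC s) (xA s)
       + 2 * min (xC s) 0 * fC (xI s) (xC s) + 2 * min (xA s) 0 * fA (xI s) (xA s)
       \<le> KK B * ((min (xI s) 0)^2 + (min (xC s) 0)^2 + (min (xA s) 0)^2)"
      by (rule ica_ineq)
  qed (use init t in auto)
  then have "(min (xI t) 0)^2 + (min (xC t) 0)^2 + (min (xA t) 0)^2 = 0" by simp
  moreover have "(min (xI t) 0)^2 \<ge> 0" "(min (xC t) 0)^2 \<ge> 0" "(min (xA t) 0)^2 \<ge> 0" by simp_all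
  ultimately have "(min (xI t) 0)^2 = 0" "(min (xC t) 0)^2 = 0" "(min (xA t) 0)^2 = 0" by linarith+
  then have "min (xI t) 0 = 0" "min (xC t) 0 = 0" "min (xA t) 0 = 0" by simp_all
  then show ?thesis by (metis min.absorb_iff2 nle_le)
qed

lemma E_nn: "t \<ge> 0 \<Longrightarrow> xE t \<ge> 0"
proof -
  assume t: "t \<ge> 0"
  have "(\<lambda>s. xE s * exp (mu * s)) 0 \<le> (\<lambda>s. xE s * exp (mu * s)) t"
  proof (rule mono_from_deriv[where f="\<lambda>s. xE s * exp (mu * s)" and f'="\<lambda>s. exp (mu * s) * (psi * xS s)"])
    show "continuous_on {0..} (\<lambda>s. xE s * exp (mu * s))" using contE by (intro continuous_intros)
    fix s :: real assume s: "s > 0"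
    have "((\<lambda>s. xE s * exp (mu * s)) has_real_derivative fE (xS s) (xE s) * exp (mu * s) + xE s * (exp (mu * s) * mu)) (at s)"
      using s by (auto intro!: derivative_eq_intros dE)
    moreover have "fE (xS s) (xE s) * exp (mu * s) + xE s * (exp (mu * s) * mu) = exp (mu * s) * (psi * xS s)"
      by (simp add: fE_def algebra_simps)
    ultimately show "((\<lambda>s. xE s * exp (mu * s)) has_real_derivative exp (mu * s) * (psi * xS s)) (at s)" by simp
    show "exp (mu * s) * (psi * xS s) \<ge> 0" using psi S_nn[of s] s by simp
  qed (use t in auto)
  then have "xE t * exp (mu * t) \<ge> 0" using init by simp
  then show ?thesis by (simp add: zero_le_mult_iff)
qed

definition "xN t = xS t + xI t + xC t + xA t + xE t"

lemma N_le: "t \<ge> 0 \<Longrightarrow> xN t \<le> Bx"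
proof -
  assume t: "t \<ge> 0"
  have "(\<lambda>s. (xN s - Lam / mu) * exp (mu * s)) t \<le> (\<lambda>s. (xN s - Lam / mu) * exp (mu * s)) 0"
  proof (rule antimono_from_deriv[where f="\<lambda>s. (xN s - Lam / mu) * exp (mu * s)" and f'="\<lambda>s. 0"])
    show "continuous_on {0..} (\<lambda>s. (xN s - Lam / mu) * exp (mu * s))"
      unfolding xN_def using contS contI contC contA contE by (intro continuous_intros)
    fix s :: real assume s: "s > 0"
    have "((\<lambda>s. (xN s - Lam / mu) * exp (mu * s)) has_real_derivative
        (fS (xS s) (xI s) (xC s) (xA s) + fI (xS s) (xI s) (xC s) (xA s) + fC (xI s) (xC s) + fA (xI s) (xA s) + fE (xS s) (xE s)) * exp (mu * s)
         + (xN s - Lam / mu) * (exp (mu * s) * mu)) (at s)"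
      unfolding xN_def using s by (auto intro!: derivative_eq_intros dS dI dC dA dE)
    moreover have "(fS (xS s) (xI s) (xC s) (xA s) + fI (xS s) (xI s) (xC s) (xA s) + fC (xI s) (xC s) + fA (xI s) (xA s) + fE (xS s) (xE s)) * exp (mu * s)
         + (xN s - Lam / mu) * (exp (mu * s) * mu) = 0"
      unfolding sum_f xN_def using mu by (simp add: field_simps)
    ultimately show "((\<lambda>s. (xN s - Lam / mu) * exp (mu * s)) has_real_derivative 0) (at s)" by simp
  qed (use t in auto)
  then have "(xN t - Lam / mu) * exp (mu * t) \<le> 0" using init by (simp add: xN_def)
  then show ?thesis by (simp add: mult_le_0_iff Bx_def)
qed

lemma box: "t \<ge> 0 \<Longrightarrow> 0 \<le> xS t \<and> xS t \<le> Bx \<and> 0 \<le> xI t \<and> xI t \<le> Bx \<and> 0 \<le> xC t \<and> xC t \<le> Bx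
   \<and> 0 \<le> xA t \<and> xA t \<le> Bx \<and> 0 \<le> xE t \<and> xE t \<le> Bx"
  using S_nn[of t] ICA_nn[of t] E_nn[of t] N_le[of t] unfolding xN_def by auto

end

context hivsol begin

definition "KS = b1 * (1 + etaC + etaA) * Bx + mu + psi"

lemma T_le: "t \<ge> 0 \<Longrightarrow> xI t + etaC * xC t + etaA * xA t \<le> (1 + etaC + etaA) * Bx"
proof -
  assume t: "t \<ge> 0"
  have "etaC * xC t \<le> etaC * Bx" "etaA * xA t \<le> etaA * Bx" using box[OF t] etaC etaA by (auto intro: mult_left_mono)
  then show ?thesis using box[OF t] by (simp add: algebra_simps)
qed

lemma T_nn: "t \<ge> 0 \<Longrightarrow> xI t + etaC * xC t + etaA * xA t \<ge> 0"
  using box etaC etaA by (simp add: add_nonneg_nonneg)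

lemma S_strict: assumes "0 \<le> a" "a < b" shows "xS a * exp (KS * a) < xS b * exp (KS * b)"
proof (rule strict_from_deriv[where f="\<lambda>s. xS s * exp (KS * s)" and f'="\<lambda>s. fS (xS s) (xI s) (xC s) (xA s) * exp (KS * s) + xS s * (exp (KS * s) * KS)"])
  show "continuous_on {0..} (\<lambda>s. xS s * exp (KS * s))" using contS by (intro continuous_intros)
  fix s :: real assume s: "s > 0"
  show "((\<lambda>s. xS s * exp (KS * s)) has_real_derivative fS (xS s) (xI s) (xC s) (xA s) * exp (KS * s) + xS s * (exp (KS * s) * KS)) (at s)"
    using s by (auto intro!: derivative_eq_intros dS)
  have "fS (xS s) (xI s) (xC s) (xA s) + xS s * KS = Lam + (KS - (b1 * (xI s + etaC * xC s + etaA * xA s) + mu + psi)) * xS s"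
    by (simp add: fS_alt algebra_simps)
  moreover have "(KS - (b1 * (xI s + etaC * xC s + etaA * xA s) + mu + psi)) * xS s \<ge> 0"
  proof (rule mult_nonneg_nonneg)
    have "b1 * (xI s + etaC * xC s + etaA * xA s) \<le> b1 * ((1 + etaC + etaA) * Bx)"
      using T_le[of s] s b1_pos by (intro mult_left_mono) auto
    then show "KS - (b1 * (xI s + etaC * xC s + etaA * xA s) + mu + psi) \<ge> 0" by (simp add: KS_def algebra_simps)
    show "xS s \<ge> 0" using box[of s] s by simp
  qed
  ultimately have "fS (xS s) (xI s) (xC s) (xA s) + xS s * KS > 0" using Lam by simp
  then show "fS (xS s) (xI s) (xC s) (xA s) * exp (KS * s) + xS s * (exp (KS * s) * KS) > 0"
  proof -
    have "fS (xS s) (xI s) (xC s) (xA s) * exp (KS * s) + xS s * (exp (KS * s) * KS)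
        = exp (KS * s) * (fS (xS s) (xI s) (xC s) (xA s) + xS s * KS)" by (simp add: algebra_simps)
    with \<open>fS (xS s) (xI s) (xC s) (xA s) + xS s * KS > 0\<close> show ?thesis by simp
  qed
qed (use assms in auto)

lemma S_pos: "t > 0 \<Longrightarrow> xS t > 0"
proof -
  assume t: "t > 0"
  have "xS 0 * exp (KS * 0) < xS t * exp (KS * t)" by (rule S_strict) (use t in auto)
  then have "xS t * exp (KS * t) > 0" using init by simp
  then show ?thesis by (simp add: zero_less_mult_iff)
qed

lemma S_pos0: "xS 0 > 0 \<Longrightarrow> t \<ge> 0 \<Longrightarrow> xS t > 0"
  using S_pos[of t] by (cases "t = 0") auto

lemma dIhat: "s > 0 \<Longrightarrow> ((\<lambda>s. xI s * exp (xi3 * s)) has_real_derivative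
   exp (xi3 * s) * (b1 * (xI s + etaC * xC s + etaA * xA s) * xS s + alpha * xA s + omega * xC s)) (at s)"
proof -
  assume s: "s > 0"
  have "((\<lambda>s. xI s * exp (xi3 * s)) has_real_derivative fI (xS s) (xI s) (xC s) (xA s) * exp (xi3 * s) + xI s * (exp (xi3 * s) * xi3)) (at s)"
    using s by (auto intro!: derivative_eq_intros dI)
  moreover have "fI (xS s) (xI s) (xC s) (xA s) * exp (xi3 * s) + xI s * (exp (xi3 * s) * xi3)
    = exp (xi3 * s) * (b1 * (xI s + etaC * xC s + etaA * xA s) * xS s + alpha * xA s + omega * xC s)"
    by (simp add: fI_def algebra_simps)
  ultimately show ?thesis by simp
qed

lemma dChat: "s > 0 \<Longrightarrow> ((\<lambda>s. xC s * exp (xi2 * s)) has_real_derivative exp (xi2 * s) * (phi * xI s)) (at s)"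
proof -
  assume s: "s > 0"
  have "((\<lambda>s. xC s * exp (xi2 * s)) has_real_derivative fC (xI s) (xC s) * exp (xi2 * s) + xC s * (exp (xi2 * s) * xi2)) (at s)"
    using s by (auto intro!: derivative_eq_intros dC)
  moreover have "fC (xI s) (xC s) * exp (xi2 * s) + xC s * (exp (xi2 * s) * xi2) = exp (xi2 * s) * (phi * xI s)"
    by (simp add: fC_def algebra_simps)
  ultimately show ?thesis by simp
qed

lemma dAhat: "s > 0 \<Longrightarrow> ((\<lambda>s. xA s * exp (xi1 * s)) has_real_derivative exp (xi1 * s) * (rho * xI s)) (at s)"
proof -
  assume s: "s > 0"
  have "((\<lambda>s. xA s * exp (xi1 * s)) has_real_derivative fA (xI s) (xA s) * exp (xi1 * s) + xA s * (exp (xi1 * s) * xi1)) (at s)"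
    using s by (auto intro!: derivative_eq_intros dA)
  moreover have "fA (xI s) (xA s) * exp (xi1 * s) + xA s * (exp (xi1 * s) * xi1) = exp (xi1 * s) * (rho * xI s)"
    by (simp add: fA_def algebra_simps)
  ultimately show ?thesis by simp
qed

lemma cIhat: "continuous_on {0..} (\<lambda>s. xI s * exp (xi3 * s))" using contI by (intro continuous_intros)
lemma cChat: "continuous_on {0..} (\<lambda>s. xC s * exp (xi2 * s))" using contC by (intro continuous_intros)
lemma cAhat: "continuous_on {0..} (\<lambda>s. xA s * exp (xi1 * s))" using contA by (intro continuous_intros)

lemma Ihat_nn: "s > 0 \<Longrightarrow> exp (xi3 * s) * (b1 * (xI s + etaC * xC s + etaA * xA s) * xS s + alpha * xA s + omega * xC s) \<ge> 0"
  using box[of s] T_nn[of s] b1_pos alpha omega etaC etaA by (intro mult_nonneg_nonneg add_nonneg_nonneg) auto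

lemma I_ge: "t \<ge> 0 \<Longrightarrow> xI 0 \<le> xI t * exp (xi3 * t)"
  using mono_from_deriv[OF cIhat dIhat Ihat_nn, of 0 t] by simp
lemma C_ge: "t \<ge> 0 \<Longrightarrow> xC 0 \<le> xC t * exp (xi2 * t)"
  using mono_from_deriv[OF cChat dChat, of 0 t] box phi by simp
lemma A_ge: "t \<ge> 0 \<Longrightarrow> xA 0 \<le> xA t * exp (xi1 * t)"
  using mono_from_deriv[OF cAhat dAhat, of 0 t] box rho by simp

lemma pos_of_hat: "0 < v * exp e \<Longrightarrow> 0 < (v::real)"
  by (simp add: zero_less_mult_iff)

lemma CA_of_I: assumes "\<And>s. s > 0 \<Longrightarrow> xI s > 0" "t > 0" shows "xC t > 0 \<and> xA t > 0"
proof
  have d: "\<And>s. s > 0 \<Longrightarrow> 0 < exp (xi2 * s) * (phi * xI s)" using assms(1) phi by simp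
  have "xC 0 * exp (xi2 * 0) < xC t * exp (xi2 * t)"
    by (rule strict_from_deriv[OF cChat dChat d]) (use assms(2) in simp_all)
  then have "0 < xC t * exp (xi2 * t)" using init(3) by simp
  then show "xC t > 0" by (rule pos_of_hat)
  have d2: "\<And>s. s > 0 \<Longrightarrow> 0 < exp (xi1 * s) * (rho * xI s)" using assms(1) rho by simp
  have "xA 0 * exp (xi1 * 0) < xA t * exp (xi1 * t)"
    by (rule strict_from_deriv[OF cAhat dAhat d2]) (use assms(2) in simp_all)
  then have "0 < xA t * exp (xi1 * t)" using init(4) by simp
  then show "xA t > 0" by (rule pos_of_hat)
qed

lemma I_of_CA: assumes "(\<forall>s>0. xC s > 0) \<or> (\<forall>s>0. xA s > 0)" "t > 0" shows "xI t > 0"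
proof -
  have "xI 0 * exp (xi3 * 0) < xI t * exp (xi3 * t)"
  proof (rule strict_from_deriv[OF cIhat dIhat])
    fix s :: real assume s: "s > 0"
    have s0: "s \<ge> 0" using s by simp
    have bx: "xS s \<ge> 0" "xA s \<ge> 0" "xC s \<ge> 0" using box[OF s0] by simp_all
    have a: "b1 * (xI s + etaC * xC s + etaA * xA s) * xS s \<ge> 0" "alpha * xA s \<ge> 0" "omega * xC s \<ge> 0"
      using bx T_nn[OF s0] b1_pos alpha omega by simp_all
    have "xC s > 0 \<or> xA s > 0" using assms(1) s by blast
    then have "alpha * xA s > 0 \<or> omega * xC s > 0" using alpha omega by (metis mult_pos_pos)
    then have "b1 * (xI s + etaC * xC s + etaA * xA s) * xS s + alpha * xA s + omega * xC s > 0"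
      using a by linarith
    then show "0 < exp (xi3 * s) * (b1 * (xI s + etaC * xC s + etaA * xA s) * xS s + alpha * xA s + omega * xC s)"
      by simp
  qed (use assms(2) in simp_all)
  then have "0 < xI t * exp (xi3 * t)" using init(2) by simp
  then show ?thesis by (rule pos_of_hat)
qed

lemma ICA_pos:
  assumes "xI 0 > 0 \<or> xC 0 > 0 \<or> xA 0 > 0" "t > 0"
  shows "xI t > 0 \<and> xC t > 0 \<and> xA t > 0"
proof -
  have Ipos: "\<forall>s>0. xI s > 0"
  proof (cases "xI 0 > 0")
    case True
    show ?thesis
    proof (intro allI impI)
      fix s :: real assume "s > 0"
      then have "xI 0 \<le> xI s * exp (xi3 * s)" using I_ge by simp
      with True have "0 < xI s * exp (xi3 * s)" by simp
      then show "xI s > 0" by (rule pos_of_hat)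
    qed
  next
    case False
    then have "xC 0 > 0 \<or> xA 0 > 0" using assms(1) by simp
    then have "(\<forall>s>0. xC s > 0) \<or> (\<forall>s>0. xA s > 0)"
    proof
      assume c: "xC 0 > 0"
      have "\<forall>s>0. xC s > 0"
      proof (intro allI impI)
        fix s :: real assume "s > 0"
        then have "xC 0 \<le> xC s * exp (xi2 * s)" using C_ge by simp
        with c have "0 < xC s * exp (xi2 * s)" by simp
        then show "xC s > 0" by (rule pos_of_hat)
      qed
      then show ?thesis by simp
    next
      assume c: "xA 0 > 0"
      have "\<forall>s>0. xA s > 0"
      proof (intro allI impI)
        fix s :: real assume "s > 0"
        then have "xA 0 \<le> xA s * exp (xi1 * s)" using A_ge by simp
        with c have "0 < xA s * exp (xi1 * s)" by simp
        then show "xA s > 0" by (rule pos_of_hat)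
      qed
      then show ?thesis by simp
    qed
    then show ?thesis using I_of_CA by blast
  qed
  then have "xC t > 0 \<and> xA t > 0" using CA_of_I[of t] assms(2) by blast
  then show ?thesis using Ipos assms(2) by blast
qed

lemma pos_all0:
  assumes "xS 0 > 0" "xI 0 > 0" "xC 0 > 0" "xA 0 > 0" "t \<ge> 0"
  shows "xS t > 0 \<and> xI t > 0 \<and> xC t > 0 \<and> xA t > 0"
proof (cases "t = 0")
  case True then show ?thesis using assms by simp
next
  case False then have "t > 0" using assms(5) by simp
  then show ?thesis using assms S_pos0[of t] ICA_pos[of t] by blast
qed

end

context hiv begin

definition "wC = (etaC * b1 * Ss + omega) / xi2"
definition "wA = (etaA * b1 * Ss + alpha) / xi1"
definition "kE = mu * mu / (2 * Bx * (mu * mu + psi * psi))"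
definition "VV S I C A E = (S - Ss * ln S) + (I - Is * ln I) + wC * (C - Cs * ln C) + wA * (A - As * ln A) + kE * (E - Es)^2"
definition "dV S I C A E = (1 - Ss / S) * fS S I C A + (1 - Is / I) * fI S I C A + wC * (1 - Cs / C) * fC I C
   + wA * (1 - As / A) * fA I A + 2 * kE * (E - Es) * fE S E"
definition "FFn S I C A E = (S - Ss)^2 + (E - Es)^2 + (C * Is - Cs * I)^2 + (A * Is - As * I)^2"
definition "kap = min (min ((mu + psi) / (2 * Bx)) (kE * mu)) (min (omega / (Is * Bx^2)) (alpha / (Is * Bx^2)))"

lemma wC_pos: "wC > 0" using etaC b1_pos Ss_pos omega xi_pos by (simp add: wC_def add_pos_pos)
lemma wA_pos: "wA > 0" using etaA b1_pos Ss_pos alpha xi_pos by (simp add: wA_def add_pos_pos)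
lemma kE_pos: "kE > 0" using mu Bx_pos by (simp add: kE_def add_pos_nonneg)
lemma kap_pos: "kap > 0"
  using mu psi Bx_pos kE_pos omega alpha Is_pos by (simp add: kap_def)

lemma FFn_nn: "FFn S I C A E \<ge> 0" by (simp add: FFn_def)

lemma first4:
  assumes "S > 0" "I > 0" "C > 0" "A > 0"
  shows "(1 - Ss / S) * fS S I C A + (1 - Is / I) * fI S I C A + wC * (1 - Cs / C) * fC I C + wA * (1 - As / A) * fA I A
   = - (mu + psi)*(S-Ss)^2/S - b1*Is*(S-Ss)^2/S
   + etaC*b1*Ss*Cs*(3 - Ss/S - S*C*Is/(Ss*Cs*I) - I*Cs/(Is*C))
   + etaA*b1*Ss*As*(3 - Ss/S - S*A*Is/(Ss*As*I) - I*As/(Is*A))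
   - omega*(C*Is - Cs*I)^2/(Is*C*I) - alpha*(A*Is - As*I)^2/(Is*A*I)"
proof -
  have eS: "fS S I C A = b1*(Is+etaC*Cs+etaA*As)*Ss + (mu+psi)*Ss - b1*(I+etaC*C+etaA*A)*S - (mu+psi)*S"
    unfolding fS_def using R1 by (simp add: Ts_def)
  have x3: "xi3 = (b1*(Is+etaC*Cs+etaA*As)*Ss + alpha*As + omega*Cs)/Is"
    using R2 Is_pos by (simp add: Ts_def field_simps)
  have eI: "fI S I C A = b1*(I+etaC*C+etaA*A)*S - (b1*(Is+etaC*Cs+etaA*As)*Ss + alpha*As + omega*Cs)/Is * I + alpha*A + omega*C"
    unfolding fI_def x3 by simp
  have eC: "wC * (1 - Cs / C) * fC I C = (etaC*b1*Ss + omega)*(1 - Cs/C)*(Cs*I/Is - C)"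
  proof -
    have "xi2 * (Cs*I/Is - C) = (xi2*Cs)*I/Is - xi2*C" by (simp add: algebra_simps)
    also have "\<dots> = (phi*Is)*I/Is - xi2*C" using R3 by simp
    also have "\<dots> = fC I C" using Is_pos by (simp add: fC_def)
    finally have "fC I C = xi2 * (Cs*I/Is - C)" by simp
    then show ?thesis using xi_pos by (simp add: wC_def)
  qed
  have eA: "wA * (1 - As / A) * fA I A = (etaA*b1*Ss + alpha)*(1 - As/A)*(As*I/Is - A)"
  proof -
    have "xi1 * (As*I/Is - A) = (xi1*As)*I/Is - xi1*A" by (simp add: algebra_simps)
    also have "\<dots> = (rho*Is)*I/Is - xi1*A" using R4 by simp
    also have "\<dots> = fA I A" using Is_pos by (simp add: fA_def)
    finally have "fA I A = xi1 * (As*I/Is - A)" by simp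
    then show ?thesis using xi_pos by (simp add: wA_def)
  qed
  show ?thesis unfolding eS eI eC eA
    by (rule lyap_id[OF assms Ss_pos Is_pos Cs_pos As_pos])
qed

lemma eta_term:
  assumes "S > 0" "I > 0" "C > 0" "Xs > 0" "c \<ge> 0"
  shows "c * (3 - Ss/S - S*C*Is/(Ss*Xs*I) - I*Xs/(Is*C)) \<le> 0"
proof -
  have "3 \<le> Ss/S + S*C*Is/(Ss*Xs*I) + I*Xs/(Is*C)"
    by (rule amgm3) (use assms Ss_pos Is_pos in \<open>simp_all add: field_simps\<close>)
  then show ?thesis using assms(5) by (simp add: mult_nonneg_nonpos)
qed

lemma sq_frac_le:
  fixes P Q c X :: real
  assumes "0 < P" "P \<le> Q" "c \<ge> 0"
  shows "c * X^2 / Q \<le> c * X^2 / P"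
proof -
  have "Q > 0" using assms by linarith
  then have "0 < Q * P" using assms by simp
  moreover have "0 \<le> c * X^2" using assms by simp
  ultimately show ?thesis using assms(2) by (intro divide_left_mono) auto
qed

lemma lyap_ineq:
  assumes S: "0 < S" "S \<le> Bx" and I: "0 < I" "I \<le> Bx" and C: "0 < C" "C \<le> Bx" and A: "0 < A" "A \<le> Bx"
  shows "dV S I C A E \<le> - kap * FFn S I C A E"
proof -
  let ?u = "S - Ss" and ?v = "E - Es" and ?X = "C*Is - Cs*I" and ?Y = "A*Is - As*I"
  have e1: "etaC*b1*Ss*Cs*(3 - Ss/S - S*C*Is/(Ss*Cs*I) - I*Cs/(Is*C)) \<le> 0"
    by (rule eta_term) (use S I C Cs_pos etaC b1_pos Ss_pos in simp_all)
  have e2: "etaA*b1*Ss*As*(3 - Ss/S - S*A*Is/(Ss*As*I) - I*As/(Is*A)) \<le> 0"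
    by (rule eta_term) (use S I A As_pos etaA b1_pos Ss_pos in simp_all)
  have t1: "(mu + psi) * ?u^2 / Bx \<le> (mu + psi) * ?u^2 / S"
    by (rule sq_frac_le) (use S mu psi in simp_all)
  have t2: "b1 * Is * ?u^2 / S \<ge> 0" using b1_pos Is_pos S by simp
  have CI: "C * I \<le> Bx * Bx" using C I by (intro mult_mono) auto
  have AI: "A * I \<le> Bx * Bx" using A I by (intro mult_mono) auto
  have t3: "omega * ?X^2 / (Is * Bx^2) \<le> omega * ?X^2 / (Is * C * I)"
    by (rule sq_frac_le) (use Is_pos C I CI omega in \<open>simp_all add: power2_eq_square mult.assoc\<close>)
  have t4: "alpha * ?Y^2 / (Is * Bx^2) \<le> alpha * ?Y^2 / (Is * A * I)"
    by (rule sq_frac_le) (use Is_pos A I AI alpha in \<open>simp_all add: power2_eq_square mult.assoc\<close>)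
  have fE: "fE S E = psi * ?u - mu * ?v" using R5 by (simp add: fE_def algebra_simps)
  have cross: "2 * psi * ?u * ?v \<le> psi^2 * ?u^2 / mu + mu * ?v^2"
  proof -
    have "0 \<le> (psi * ?u - mu * ?v)^2 / mu" using mu by simp
    also have "(psi * ?u - mu * ?v)^2 / mu = psi^2 * ?u^2 / mu + mu * ?v^2 - 2 * psi * ?u * ?v"
      using mu by (simp add: field_simps power2_eq_square)
    finally show ?thesis by simp
  qed
  have t5: "2 * kE * ?v * fE S E \<le> kE * psi^2 / mu * ?u^2 - kE * mu * ?v^2"
  proof -
    have "2 * kE * ?v * fE S E = kE * (2 * psi * ?u * ?v) - 2 * kE * mu * ?v^2"
      unfolding fE by (simp add: algebra_simps power2_eq_square)
    also have "\<dots> \<le> kE * (psi^2 * ?u^2 / mu + mu * ?v^2) - 2 * kE * mu * ?v^2"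
      using cross kE_pos by (simp add: mult_left_mono)
    also have "\<dots> = kE * psi^2 / mu * ?u^2 - kE * mu * ?v^2" by (simp add: algebra_simps)
    finally show ?thesis .
  qed
  have kEb: "kE * psi^2 / mu \<le> (mu + psi) / (2 * Bx)"
  proof -
    define D where "D = mu * mu + psi * psi"
    have d: "D > 0" using mu by (simp add: add_pos_nonneg D_def)
    have kE': "kE = mu * mu / (2 * Bx * D)" by (simp add: kE_def D_def)
    have "kE * psi^2 / mu = (mu / (2 * Bx)) * (psi^2 / D)"
      unfolding kE' using mu Bx_pos d by (simp add: field_simps)
    also have "\<dots> \<le> (mu / (2 * Bx)) * 1"
    proof (rule mult_left_mono)
      have "psi^2 \<le> D" by (simp add: D_def power2_eq_square)
      then show "psi^2 / D \<le> 1" using d by simp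
      show "0 \<le> mu / (2 * Bx)" using mu Bx_pos by simp
    qed
    also have "\<dots> \<le> (mu + psi) / (2 * Bx)" using psi Bx_pos by (simp add: divide_right_mono)
    finally show ?thesis .
  qed
  have t5': "kE * psi^2 / mu * ?u^2 \<le> (mu + psi) / (2 * Bx) * ?u^2" using kEb by (rule mult_right_mono) simp
  have main: "dV S I C A E \<le> - ((mu + psi) / (2 * Bx)) * ?u^2 - (kE * mu) * ?v^2
       - (omega / (Is * Bx^2)) * ?X^2 - (alpha / (Is * Bx^2)) * ?Y^2"
  proof -
    have "dV S I C A E = - (mu + psi)*?u^2/S - b1*Is*?u^2/S
      + etaC*b1*Ss*Cs*(3 - Ss/S - S*C*Is/(Ss*Cs*I) - I*Cs/(Is*C))
      + etaA*b1*Ss*As*(3 - Ss/S - S*A*Is/(Ss*As*I) - I*As/(Is*A))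
      - omega*?X^2/(Is*C*I) - alpha*?Y^2/(Is*A*I) + 2 * kE * ?v * fE S E"
      unfolding dV_def first4[OF S(1) I(1) C(1) A(1), symmetric] by simp
    moreover have "(mu + psi) * ?u^2 / Bx = 2 * ((mu + psi) / (2 * Bx) * ?u^2)" by simp
    moreover have "omega * ?X^2 / (Is * Bx^2) = (omega / (Is * Bx^2)) * ?X^2" by simp
    moreover have "alpha * ?Y^2 / (Is * Bx^2) = (alpha / (Is * Bx^2)) * ?Y^2" by simp
    ultimately show ?thesis using e1 e2 t1 t2 t3 t4 t5 t5' by linarith
  qed
  have k: "kap \<le> (mu + psi) / (2 * Bx)" "kap \<le> kE * mu" "kap \<le> omega / (Is * Bx^2)" "kap \<le> alpha / (Is * Bx^2)"
    by (simp_all add: kap_def)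
  have "kap * FFn S I C A E = kap * ?u^2 + kap * ?v^2 + kap * ?X^2 + kap * ?Y^2"
    by (simp add: FFn_def algebra_simps)
  moreover have "kap * ?u^2 \<le> (mu + psi) / (2 * Bx) * ?u^2" using k(1) by (rule mult_right_mono) simp
  moreover have "kap * ?v^2 \<le> (kE * mu) * ?v^2" using k(2) by (rule mult_right_mono) simp
  moreover have "kap * ?X^2 \<le> (omega / (Is * Bx^2)) * ?X^2" using k(3) by (rule mult_right_mono) simp
  moreover have "kap * ?Y^2 \<le> (alpha / (Is * Bx^2)) * ?Y^2" using k(4) by (rule mult_right_mono) simp
  ultimately show ?thesis using main by linarith
qed

end

lemma dist_sq5:
  fixes a b c d e a' b' c' d' e' :: real
  shows "(dist (a, b, c, d, e) (a', b', c', d', e'))^2 = (a - a')^2 + (b - b')^2 + (c - c')^2 + (d - d')^2 + (e - e')^2"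
  by (simp add: dist_prod_def dist_real_def add_nonneg_nonneg)

lemma dlog:
  assumes "(f has_real_derivative f') (at t)" "f t > 0"
  shows "((\<lambda>t. f t - c * ln (f t)) has_real_derivative (1 - c / f t) * f') (at t)"
proof -
  have "((\<lambda>t. f t - c * ln (f t)) has_real_derivative f' - c * (f' * inverse (f t))) (at t)"
    using assms by (auto intro!: derivative_eq_intros simp: divide_inverse mult_ac)
  moreover have "c * (f' * inverse (f t)) = f' * c / f t" by (simp add: divide_inverse mult_ac)
  then have "f' - c * (f' * inverse (f t)) = (1 - c / f t) * f'"
    by (simp add: algebra_simps)
  ultimately show ?thesis by simp
qed

lemma sq_to0: "((\<lambda>t. (f t)^2) \<longlongrightarrow> 0) F \<Longrightarrow> (f \<longlongrightarrow> (0::real)) F"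
proof -
  assume "((\<lambda>t. (f t)^2) \<longlongrightarrow> 0) F"
  then have "((\<lambda>t. sqrt ((f t)^2)) \<longlongrightarrow> sqrt 0) F" by (rule tendsto_real_sqrt)
  then have "((\<lambda>t. \<bar>f t\<bar>) \<longlongrightarrow> 0) F" by simp
  then show ?thesis by (rule tendsto_rabs_zero_cancel)
qed

lemma sandwich0:
  fixes f g :: "real \<Rightarrow> real"
  assumes "(g \<longlongrightarrow> 0) at_top" "\<And>t. t \<ge> T \<Longrightarrow> 0 \<le> f t" "\<And>t. t \<ge> T \<Longrightarrow> f t \<le> g t"
  shows "(f \<longlongrightarrow> 0) at_top"
proof (rule tendsto_sandwich[of "\<lambda>t. 0" f at_top g])
  show "eventually (\<lambda>t. 0 \<le> f t) at_top" using assms(2) by (auto simp: eventually_at_top_linorder)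
  show "eventually (\<lambda>t. f t \<le> g t) at_top" using assms(3) by (auto simp: eventually_at_top_linorder)
qed (use assms(1) in auto)

lemma ev_eq:
  fixes f g :: "real \<Rightarrow> 'a::topological_space"
  assumes "(g \<longlongrightarrow> l) at_top" "\<And>t. t \<ge> T \<Longrightarrow> g t = f t"
  shows "(f \<longlongrightarrow> l) at_top"
  by (rule Lim_transform_eventually[OF assms(1)]) (use assms(2) in \<open>auto simp: eventually_at_top_linorder\<close>)

context hiv begin

definition "gf x = x - 1 - ln (x::real)"

lemma comp_id: "X > 0 \<Longrightarrow> Xs > 0 \<Longrightarrow> (X - Xs * ln X) - (Xs - Xs * ln Xs) = Xs * gf (X / Xs)"
  by (simp add: gf_def ln_div field_simps)

lemma VV_diff:
  assumes "S > 0" "I > 0" "C > 0" "A > 0"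
  shows "VV S I C A E - VV Ss Is Cs As Es = Ss * gf (S / Ss) + Is * gf (I / Is) + wC * (Cs * gf (C / Cs))
     + wA * (As * gf (A / As)) + kE * (E - Es)^2"
proof -
  have "VV S I C A E - VV Ss Is Cs As Es = ((S - Ss * ln S) - (Ss - Ss * ln Ss)) + ((I - Is * ln I) - (Is - Is * ln Is))
     + wC * ((C - Cs * ln C) - (Cs - Cs * ln Cs)) + wA * ((A - As * ln A) - (As - As * ln As)) + kE * (E - Es)^2"
    by (simp add: VV_def algebra_simps)
  then show ?thesis using assms Ss_pos Is_pos Cs_pos As_pos by (simp add: comp_id)
qed

lemma gf_nn: "x > 0 \<Longrightarrow> gf x \<ge> 0" using gfun_nonneg by (simp add: gf_def)

lemma VV_ge:
  assumes "S > 0" "I > 0" "C > 0" "A > 0"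
  shows "VV S I C A E \<ge> VV Ss Is Cs As Es"
proof -
  have "Ss * gf (S / Ss) \<ge> 0" "Is * gf (I / Is) \<ge> 0" "wC * (Cs * gf (C / Cs)) \<ge> 0" "wA * (As * gf (A / As)) \<ge> 0"
    "kE * (E - Es)^2 \<ge> 0"
    using assms Ss_pos Is_pos Cs_pos As_pos wC_pos wA_pos kE_pos gf_nn by simp_all
  then show ?thesis using VV_diff[OF assms, of E] by linarith
qed

lemma comp_low:
  assumes "0 < Xs" "0 < X" "X \<le> Bx"
  shows "(X - Xs)^2 / (2 * max 1 (Bx / Xs) * Xs) \<le> Xs * gf (X / Xs)"
proof -
  have "(X / Xs - 1)^2 / (2 * max 1 (Bx / Xs)) \<le> gf (X / Xs)"
    unfolding gf_def
  proof (rule gfun_lower)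
    show "0 < X / Xs" using assms by simp
    have "X / Xs \<le> Bx / Xs" using assms by (intro divide_right_mono) auto
    then show "X / Xs \<le> max 1 (Bx / Xs)" by (simp add: le_max_iff_disj)
  qed simp
  then have "Xs * ((X / Xs - 1)^2 / (2 * max 1 (Bx / Xs))) \<le> Xs * gf (X / Xs)"
    by (rule mult_left_mono) (use assms(1) in simp)
  moreover have "Xs * ((X / Xs - 1)^2 / (2 * max 1 (Bx / Xs))) = (X - Xs)^2 / (2 * max 1 (Bx / Xs) * Xs)"
    using assms(1) by (simp add: field_simps power2_eq_square)
  ultimately show ?thesis by simp
qed

lemma comp_up:
  assumes "0 < Xs" "Xs / 2 \<le> X"
  shows "Xs * gf (X / Xs) \<le> 2 * (X - Xs)^2 / Xs"
proof -
  have x: "X / Xs \<ge> 1/2" using assms by (simp add: field_simps)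
  then have x0: "X / Xs > 0" by linarith
  have "gf (X / Xs) \<le> (X / Xs - 1)^2 / (X / Xs)" unfolding gf_def by (rule gfun_upper) (rule x0)
  also have "\<dots> \<le> 2 * (X / Xs - 1)^2"
  proof -
    have "(X / Xs - 1)^2 / (X / Xs) \<le> (X / Xs - 1)^2 / (1/2)"
    proof (rule divide_left_mono)
      show "0 < X / Xs * (1/2)" by (rule mult_pos_pos[OF x0]) simp
    qed (use x in auto)
    then show ?thesis by simp
  qed
  finally have "Xs * gf (X / Xs) \<le> Xs * (2 * (X / Xs - 1)^2)" by (rule mult_left_mono) (use assms(1) in simp)
  also have "\<dots> = 2 * (X - Xs)^2 / Xs" using assms(1) by (simp add: field_simps power2_eq_square)
  finally show ?thesis .
qed

definition "cL = min (min (1 / (2 * max 1 (Bx / Ss) * Ss)) (1 / (2 * max 1 (Bx / Is) * Is)))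
   (min (min (wC / (2 * max 1 (Bx / Cs) * Cs)) (wA / (2 * max 1 (Bx / As) * As))) kE)"
definition "KU = max (max (2 / Ss) (2 / Is)) (max (max (2 * wC / Cs) (2 * wA / As)) kE)"

lemma cL_pos: "cL > 0"
  using Ss_pos Is_pos Cs_pos As_pos wC_pos wA_pos kE_pos by (simp add: cL_def)
lemma KU_pos: "KU > 0"
  using Ss_pos by (simp add: KU_def less_max_iff_disj)

lemma VV_lower:
  assumes "0 < S" "S \<le> Bx" "0 < I" "I \<le> Bx" "0 < C" "C \<le> Bx" "0 < A" "A \<le> Bx"
  shows "cL * ((S - Ss)^2 + (I - Is)^2 + (C - Cs)^2 + (A - As)^2 + (E - Es)^2) \<le> VV S I C A E - VV Ss Is Cs As Es"
proof -
  have l1: "cL * (S - Ss)^2 \<le> Ss * gf (S / Ss)"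
  proof -
    have "cL * (S - Ss)^2 \<le> (1 / (2 * max 1 (Bx / Ss) * Ss)) * (S - Ss)^2"
      by (rule mult_right_mono) (simp_all add: cL_def min_le_iff_disj)
    also have "\<dots> \<le> Ss * gf (S / Ss)" using comp_low[OF Ss_pos assms(1,2)] by simp
    finally show ?thesis .
  qed
  have l2: "cL * (I - Is)^2 \<le> Is * gf (I / Is)"
  proof -
    have "cL * (I - Is)^2 \<le> (1 / (2 * max 1 (Bx / Is) * Is)) * (I - Is)^2"
      by (rule mult_right_mono) (simp_all add: cL_def min_le_iff_disj)
    also have "\<dots> \<le> Is * gf (I / Is)" using comp_low[OF Is_pos assms(3,4)] by simp
    finally show ?thesis .
  qed
  have l3: "cL * (C - Cs)^2 \<le> wC * (Cs * gf (C / Cs))"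
  proof -
    have "cL * (C - Cs)^2 \<le> (wC / (2 * max 1 (Bx / Cs) * Cs)) * (C - Cs)^2"
      by (rule mult_right_mono) (simp_all add: cL_def min_le_iff_disj)
    also have "\<dots> = wC * ((C - Cs)^2 / (2 * max 1 (Bx / Cs) * Cs))" by simp
    also have "\<dots> \<le> wC * (Cs * gf (C / Cs))"
      using comp_low[OF Cs_pos assms(5,6)] wC_pos by (intro mult_left_mono) auto
    finally show ?thesis .
  qed
  have l4: "cL * (A - As)^2 \<le> wA * (As * gf (A / As))"
  proof -
    have "cL * (A - As)^2 \<le> (wA / (2 * max 1 (Bx / As) * As)) * (A - As)^2"
      by (rule mult_right_mono) (simp_all add: cL_def min_le_iff_disj)
    also have "\<dots> = wA * ((A - As)^2 / (2 * max 1 (Bx / As) * As))" by simp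
    also have "\<dots> \<le> wA * (As * gf (A / As))"
      using comp_low[OF As_pos assms(7,8)] wA_pos by (intro mult_left_mono) auto
    finally show ?thesis .
  qed
  have l5: "cL * (E - Es)^2 \<le> kE * (E - Es)^2"
    by (rule mult_right_mono) (simp_all add: cL_def min_le_iff_disj)
  show ?thesis using VV_diff[OF assms(1,3,5,7), of E] l1 l2 l3 l4 l5 by (simp add: algebra_simps)
qed

lemma VV_upper:
  assumes "Ss / 2 \<le> S" "Is / 2 \<le> I" "Cs / 2 \<le> C" "As / 2 \<le> A"
  shows "VV S I C A E - VV Ss Is Cs As Es \<le> KU * ((S - Ss)^2 + (I - Is)^2 + (C - Cs)^2 + (A - As)^2 + (E - Es)^2)"
proof -
  have p: "S > 0" "I > 0" "C > 0" "A > 0" using assms Ss_pos Is_pos Cs_pos As_pos by linarith+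
  have l1: "Ss * gf (S / Ss) \<le> KU * (S - Ss)^2"
  proof -
    have "Ss * gf (S / Ss) \<le> 2 * (S - Ss)^2 / Ss" by (rule comp_up[OF Ss_pos assms(1)])
    also have "\<dots> = (2 / Ss) * (S - Ss)^2" by simp
    also have "\<dots> \<le> KU * (S - Ss)^2" by (rule mult_right_mono) (simp_all add: KU_def le_max_iff_disj)
    finally show ?thesis .
  qed
  have l2: "Is * gf (I / Is) \<le> KU * (I - Is)^2"
  proof -
    have "Is * gf (I / Is) \<le> 2 * (I - Is)^2 / Is" by (rule comp_up[OF Is_pos assms(2)])
    also have "\<dots> = (2 / Is) * (I - Is)^2" by simp
    also have "\<dots> \<le> KU * (I - Is)^2" by (rule mult_right_mono) (simp_all add: KU_def le_max_iff_disj)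
    finally show ?thesis .
  qed
  have l3: "wC * (Cs * gf (C / Cs)) \<le> KU * (C - Cs)^2"
  proof -
    have "wC * (Cs * gf (C / Cs)) \<le> wC * (2 * (C - Cs)^2 / Cs)"
      using comp_up[OF Cs_pos assms(3)] wC_pos by (intro mult_left_mono) auto
    also have "\<dots> = (2 * wC / Cs) * (C - Cs)^2" by simp
    also have "\<dots> \<le> KU * (C - Cs)^2" by (rule mult_right_mono) (simp_all add: KU_def le_max_iff_disj)
    finally show ?thesis .
  qed
  have l4: "wA * (As * gf (A / As)) \<le> KU * (A - As)^2"
  proof -
    have "wA * (As * gf (A / As)) \<le> wA * (2 * (A - As)^2 / As)"
      using comp_up[OF As_pos assms(4)] wA_pos by (intro mult_left_mono) auto
    also have "\<dots> = (2 * wA / As) * (A - As)^2" by simp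
    also have "\<dots> \<le> KU * (A - As)^2" by (rule mult_right_mono) (simp_all add: KU_def le_max_iff_disj)
    finally show ?thesis .
  qed
  have l5: "kE * (E - Es)^2 \<le> KU * (E - Es)^2"
    by (rule mult_right_mono) (simp_all add: KU_def le_max_iff_disj)
  show ?thesis using VV_diff[OF p, of E] l1 l2 l3 l4 l5 by (simp add: algebra_simps)
qed

lemma box_bound:
  fixes g :: "real \<Rightarrow> real \<Rightarrow> real \<Rightarrow> real \<Rightarrow> real \<Rightarrow> real"
  assumes "continuous_on UNIV (\<lambda>z. g (fst z) (fst (snd z)) (fst (snd (snd z))) (fst (snd (snd (snd z)))) (snd (snd (snd (snd z)))))"
  shows "\<exists>M. \<forall>S I C A E. 0 \<le> S \<and> S \<le> Bx \<and> 0 \<le> I \<and> I \<le> Bx \<and> 0 \<le> C \<and> C \<le> Bx \<and> 0 \<le> A \<and> A \<le> Bx \<and> 0 \<le> E \<and> E \<le> Bx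
     \<longrightarrow> \<bar>g S I C A E\<bar> \<le> M"
proof -
  let ?K = "{0..Bx} \<times> {0..Bx} \<times> {0..Bx} \<times> {0..Bx} \<times> ({0..Bx}::real set)"
  let ?G = "\<lambda>z. g (fst z) (fst (snd z)) (fst (snd (snd z))) (fst (snd (snd (snd z)))) (snd (snd (snd (snd z))))"
  have "compact ?K" by (intro compact_Times compact_Icc)
  moreover have "continuous_on ?K ?G" using assms by (rule continuous_on_subset) simp
  ultimately have "compact (?G ` ?K)" by (rule compact_continuous_image[rotated])
  then have "bounded (?G ` ?K)" by (rule compact_imp_bounded)
  then obtain M where M: "\<And>y. y \<in> ?G ` ?K \<Longrightarrow> norm y \<le> M" unfolding bounded_iff by blast
  show ?thesis
  proof (intro exI allI impI)
    fix S I C A E assume h: "0 \<le> S \<and> S \<le> Bx \<and> 0 \<le> I \<and> I \<le> Bx \<and> 0 \<le> C \<and> C \<le> Bx \<and> 0 \<le> A \<and> A \<le> Bx \<and> 0 \<le> E \<and> E \<le> Bx"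
    then have "(S, I, C, A, E) \<in> ?K" by simp
    then have "?G (S, I, C, A, E) \<in> ?G ` ?K" by (rule imageI)
    then show "\<bar>g S I C A E\<bar> \<le> M" using M by fastforce
  qed
qed

end

context hiv begin
definition "dfSf S I C A = - (b1 * (fI S I C A + etaC * fC I C + etaA * fA I A) * S + b1 * (I + etaC * C + etaA * A) * fS S I C A) - (mu + psi) * fS S I C A"
definition "dFFf S I C A E = 2*(S-Ss)*fS S I C A + 2*(E-Es)*fE S E + 2*(C*Is - Cs*I)*(fC I C * Is - Cs * fI S I C A) + 2*(A*Is - As*I)*(fA I A * Is - As * fI S I C A)"

lemma cont_dfSf: "continuous_on UNIV (\<lambda>z. (\<lambda>S I C A E. dfSf S I C A) (fst z) (fst (snd z)) (fst (snd (snd z))) (fst (snd (snd (snd z)))) (snd (snd (snd (snd z)))))"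
  unfolding dfSf_def fS_def fI_def fC_def fA_def by (intro continuous_intros)

lemma cont_dFFf: "continuous_on UNIV (\<lambda>z. dFFf (fst z) (fst (snd z)) (fst (snd (snd z))) (fst (snd (snd (snd z)))) (snd (snd (snd (snd z)))))"
  unfolding dFFf_def fS_def fI_def fC_def fA_def fE_def by (intro continuous_intros)
end

context hivsol begin

lemma d_fS: "t > 0 \<Longrightarrow> ((\<lambda>t. fS (xS t) (xI t) (xC t) (xA t)) has_real_derivative dfSf (xS t) (xI t) (xC t) (xA t)) (at t)"
proof -
  assume t: "t > 0"
  have eq: "(\<lambda>t. fS (xS t) (xI t) (xC t) (xA t)) = (\<lambda>t. Lam - b1 * (xI t + etaC * xC t + etaA * xA t) * xS t - (mu + psi) * xS t)"
    by (simp add: fS_def fun_eq_iff)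
  show ?thesis unfolding eq
    by (rule derivative_eq_intros dS[OF t] dI[OF t] dC[OF t] dA[OF t] refl)+ (simp add: dfSf_def algebra_simps)
qed

lemma d_FFn: "t > 0 \<Longrightarrow> ((\<lambda>t. FFn (xS t) (xI t) (xC t) (xA t) (xE t)) has_real_derivative dFFf (xS t) (xI t) (xC t) (xA t) (xE t)) (at t)"
proof -
  assume t: "t > 0"
  have eq: "(\<lambda>t. FFn (xS t) (xI t) (xC t) (xA t) (xE t)) = (\<lambda>t. (xS t - Ss)^2 + (xE t - Es)^2 + (xC t * Is - Cs * xI t)^2 + (xA t * Is - As * xI t)^2)"
    by (simp add: FFn_def fun_eq_iff)
  show ?thesis unfolding eq
    by (rule derivative_eq_intros dS[OF t] dI[OF t] dC[OF t] dA[OF t] dE[OF t] refl)+ (simp add: dFFf_def algebra_simps)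
qed

lemma d_VV:
  assumes t: "t > 0" and p: "xS t > 0" "xI t > 0" "xC t > 0" "xA t > 0"
  shows "((\<lambda>t. VV (xS t) (xI t) (xC t) (xA t) (xE t)) has_real_derivative dV (xS t) (xI t) (xC t) (xA t) (xE t)) (at t)"
proof -
  have eq: "(\<lambda>t. VV (xS t) (xI t) (xC t) (xA t) (xE t)) = (\<lambda>t. (xS t - Ss * ln (xS t)) + (xI t - Is * ln (xI t))
     + wC * (xC t - Cs * ln (xC t)) + wA * (xA t - As * ln (xA t)) + kE * (xE t - Es)^2)"
    by (simp add: VV_def fun_eq_iff)
  have dEs: "((\<lambda>t. kE * (xE t - Es)^2) has_real_derivative kE * (2 * (xE t - Es) * fE (xS t) (xE t))) (at t)"
    by (rule derivative_eq_intros dE[OF t] refl)+ (simp add: algebra_simps)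
  have "((\<lambda>t. (xS t - Ss * ln (xS t)) + (xI t - Is * ln (xI t))
     + wC * (xC t - Cs * ln (xC t)) + wA * (xA t - As * ln (xA t)) + kE * (xE t - Es)^2) has_real_derivative
     (1 - Ss / xS t) * fS (xS t) (xI t) (xC t) (xA t) + (1 - Is / xI t) * fI (xS t) (xI t) (xC t) (xA t)
     + wC * ((1 - Cs / xC t) * fC (xI t) (xC t)) + wA * ((1 - As / xA t) * fA (xI t) (xA t))
     + kE * (2 * (xE t - Es) * fE (xS t) (xE t))) (at t)"
    by (intro DERIV_add DERIV_cmult dlog dS dI dC dA dEs t p)
  moreover have "(1 - Ss / xS t) * fS (xS t) (xI t) (xC t) (xA t) + (1 - Is / xI t) * fI (xS t) (xI t) (xC t) (xA t)
     + wC * ((1 - Cs / xC t) * fC (xI t) (xC t)) + wA * ((1 - As / xA t) * fA (xI t) (xA t))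
     + kE * (2 * (xE t - Es) * fE (xS t) (xE t)) = dV (xS t) (xI t) (xC t) (xA t) (xE t)"
    by (simp add: dV_def algebra_simps)
  ultimately show ?thesis unfolding eq by simp
qed

end

context hivsol begin

lemma conv:
  assumes pos0: "xI 0 > 0 \<or> xC 0 > 0 \<or> xA 0 > 0"
  shows "(x \<longlongrightarrow> peq) at_top"
proof -
  have posT: "xS t > 0 \<and> xI t > 0 \<and> xC t > 0 \<and> xA t > 0" if "t \<ge> 1" for t
  proof -
    have t: "t > 0" using that by simp
    show ?thesis using S_pos[OF t] ICA_pos[OF pos0 t] by blast
  qed
  have bxT: "0 \<le> xS t \<and> xS t \<le> Bx \<and> 0 \<le> xI t \<and> xI t \<le> Bx \<and> 0 \<le> xC t \<and> xC t \<le> Bx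
   \<and> 0 \<le> xA t \<and> xA t \<le> Bx \<and> 0 \<le> xE t \<and> xE t \<le> Bx" if "t \<ge> 1" for t
    using box[of t] that by simp
  obtain M1 where M1: "\<And>S I C A E. 0 \<le> S \<and> S \<le> Bx \<and> 0 \<le> I \<and> I \<le> Bx \<and> 0 \<le> C \<and> C \<le> Bx \<and> 0 \<le> A \<and> A \<le> Bx \<and> 0 \<le> E \<and> E \<le> Bx
     \<Longrightarrow> \<bar>dFFf S I C A E\<bar> \<le> M1"
    using box_bound[OF cont_dFFf] by blast
  obtain M2 where M2: "\<And>S I C A E. 0 \<le> S \<and> S \<le> Bx \<and> 0 \<le> I \<and> I \<le> Bx \<and> 0 \<le> C \<and> C \<le> Bx \<and> 0 \<le> A \<and> A \<le> Bx \<and> 0 \<le> E \<and> E \<le> Bx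
     \<Longrightarrow> \<bar>dfSf S I C A\<bar> \<le> M2"
    using box_bound[OF cont_dfSf] by blast
  let ?F = "\<lambda>t. FFn (xS t) (xI t) (xC t) (xA t) (xE t)"
  have Fk: "((\<lambda>t. kap * ?F t) \<longlongrightarrow> 0) at_top"
  proof (rule barbalat1[of 1 "\<lambda>t. VV (xS t) (xI t) (xC t) (xA t) (xE t)"
        "\<lambda>t. dV (xS t) (xI t) (xC t) (xA t) (xE t)" "\<lambda>t. kap * ?F t" "\<lambda>t. kap * dFFf (xS t) (xI t) (xC t) (xA t) (xE t)"
        "kap * M1" "VV Ss Is Cs As Es"])
    fix t :: real assume t: "t \<ge> 1"
    have t0: "t > 0" using t by simp
    have p: "xS t > 0" "xI t > 0" "xC t > 0" "xA t > 0" using posT[OF t] by auto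
    have b: "xS t \<le> Bx" "xI t \<le> Bx" "xC t \<le> Bx" "xA t \<le> Bx" using bxT[OF t] by auto
    show "((\<lambda>t. VV (xS t) (xI t) (xC t) (xA t) (xE t)) has_real_derivative dV (xS t) (xI t) (xC t) (xA t) (xE t)) (at t)"
      by (rule d_VV[OF t0 p])
    show "dV (xS t) (xI t) (xC t) (xA t) (xE t) \<le> - (kap * ?F t)"
      using lyap_ineq[OF p(1) b(1) p(2) b(2) p(3) b(3) p(4) b(4)] by simp
    show "0 \<le> kap * ?F t" using kap_pos FFn_nn by simp
    show "((\<lambda>t. kap * ?F t) has_real_derivative kap * dFFf (xS t) (xI t) (xC t) (xA t) (xE t)) (at t)"
      by (rule DERIV_cmult[OF d_FFn[OF t0]])
    have "\<bar>dFFf (xS t) (xI t) (xC t) (xA t) (xE t)\<bar> \<le> M1" by (rule M1[OF bxT[OF t]])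
    then show "\<bar>kap * dFFf (xS t) (xI t) (xC t) (xA t) (xE t)\<bar> \<le> kap * M1"
      using kap_pos by (simp add: abs_mult)
    show "VV Ss Is Cs As Es \<le> VV (xS t) (xI t) (xC t) (xA t) (xE t)" by (rule VV_ge[OF p])
  qed
  have F0: "(?F \<longlongrightarrow> 0) at_top"
  proof -
    have "((\<lambda>t. (1 / kap) * (kap * ?F t)) \<longlongrightarrow> (1 / kap) * 0) at_top"
      by (rule tendsto_mult_left[OF Fk])
    then show ?thesis using kap_pos by simp
  qed
  have sq1: "((\<lambda>t. (xS t - Ss)^2) \<longlongrightarrow> 0) at_top"
    by (rule sandwich0[OF F0, of 0]) (simp_all add: FFn_def)
  have sq2: "((\<lambda>t. (xE t - Es)^2) \<longlongrightarrow> 0) at_top"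
    by (rule sandwich0[OF F0, of 0]) (simp_all add: FFn_def)
  have sq3: "((\<lambda>t. (xC t * Is - Cs * xI t)^2) \<longlongrightarrow> 0) at_top"
    by (rule sandwich0[OF F0, of 0]) (simp_all add: FFn_def)
  have sq4: "((\<lambda>t. (xA t * Is - As * xI t)^2) \<longlongrightarrow> 0) at_top"
    by (rule sandwich0[OF F0, of 0]) (simp_all add: FFn_def)
  have u: "((\<lambda>t. xS t - Ss) \<longlongrightarrow> 0) at_top" by (rule sq_to0[OF sq1])
  have v: "((\<lambda>t. xE t - Es) \<longlongrightarrow> 0) at_top" by (rule sq_to0[OF sq2])
  have X: "((\<lambda>t. xC t * Is - Cs * xI t) \<longlongrightarrow> 0) at_top" by (rule sq_to0[OF sq3])
  have Y: "((\<lambda>t. xA t * Is - As * xI t) \<longlongrightarrow> 0) at_top" by (rule sq_to0[OF sq4])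
  have Sl: "(xS \<longlongrightarrow> Ss) at_top"
  proof -
    have "((\<lambda>t. (xS t - Ss) + Ss) \<longlongrightarrow> 0 + Ss) at_top" by (intro tendsto_intros u)
    then show ?thesis by simp
  qed
  have El: "(xE \<longlongrightarrow> Es) at_top"
  proof -
    have "((\<lambda>t. (xE t - Es) + Es) \<longlongrightarrow> 0 + Es) at_top" by (intro tendsto_intros v)
    then show ?thesis by simp
  qed
  have fS0: "((\<lambda>t. fS (xS t) (xI t) (xC t) (xA t)) \<longlongrightarrow> 0) at_top"
  proof (rule barbalat2[of 1 xS "\<lambda>t. fS (xS t) (xI t) (xC t) (xA t)" "\<lambda>t. dfSf (xS t) (xI t) (xC t) (xA t)" M2 Ss])
    fix t :: real assume t: "t \<ge> 1"
    then have t0: "t > 0" by simp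
    show "(xS has_real_derivative fS (xS t) (xI t) (xC t) (xA t)) (at t)" by (rule dS[OF t0])
    show "((\<lambda>t. fS (xS t) (xI t) (xC t) (xA t)) has_real_derivative dfSf (xS t) (xI t) (xC t) (xA t)) (at t)"
      by (rule d_fS[OF t0])
    show "\<bar>dfSf (xS t) (xI t) (xC t) (xA t)\<bar> \<le> M2" by (rule M2[OF bxT[OF t]])
  qed (rule Sl)
  let ?T = "\<lambda>t. xI t + etaC * xC t + etaA * xA t"
  have TS: "((\<lambda>t. b1 * ?T t * xS t) \<longlongrightarrow> b1 * Ts * Ss) at_top"
  proof (rule ev_eq[where T=0])
    have "((\<lambda>t. Lam - (mu + psi) * xS t - fS (xS t) (xI t) (xC t) (xA t)) \<longlongrightarrow> Lam - (mu + psi) * Ss - 0) at_top"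
      by (intro tendsto_intros Sl fS0)
    then show "((\<lambda>t. Lam - (mu + psi) * xS t - fS (xS t) (xI t) (xC t) (xA t)) \<longlongrightarrow> b1 * Ts * Ss) at_top"
    proof -
      have "Lam - (mu + psi) * Ss - 0 = b1 * Ts * Ss" using R1 by simp
      with \<open>((\<lambda>t. Lam - (mu + psi) * xS t - fS (xS t) (xI t) (xC t) (xA t)) \<longlongrightarrow> Lam - (mu + psi) * Ss - 0) at_top\<close>
      show ?thesis by simp
    qed
    fix t :: real
    show "Lam - (mu + psi) * xS t - fS (xS t) (xI t) (xC t) (xA t) = b1 * ?T t * xS t"
      by (simp add: fS_def)
  qed
  have Tl: "(?T \<longlongrightarrow> Ts) at_top"
  proof (rule ev_eq[where T=1])
    have "((\<lambda>t. (b1 * ?T t * xS t) / (b1 * xS t)) \<longlongrightarrow> (b1 * Ts * Ss) / (b1 * Ss)) at_top"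
      using b1_pos Ss_pos by (intro tendsto_intros TS Sl) simp
    then show "((\<lambda>t. (b1 * ?T t * xS t) / (b1 * xS t)) \<longlongrightarrow> Ts) at_top"
      using b1_pos Ss_pos by simp
    fix t :: real assume "t \<ge> 1"
    then have "xS t > 0" using posT by blast
    then show "(b1 * ?T t * xS t) / (b1 * xS t) = ?T t" using b1_pos by simp
  qed
  have Il: "(xI \<longlongrightarrow> Is) at_top"
  proof (rule ev_eq[where T=0])
    have "((\<lambda>t. (Is * ?T t - etaC * (xC t * Is - Cs * xI t) - etaA * (xA t * Is - As * xI t)) / Ts)
        \<longlongrightarrow> (Is * Ts - etaC * 0 - etaA * 0) / Ts) at_top"
      using Ts_pos by (intro tendsto_intros Tl X Y) simp
    then show "((\<lambda>t. (Is * ?T t - etaC * (xC t * Is - Cs * xI t) - etaA * (xA t * Is - As * xI t)) / Ts) \<longlongrightarrow> Is) at_top"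
      using Ts_pos by simp
    fix t :: real
    have "Is * ?T t - etaC * (xC t * Is - Cs * xI t) - etaA * (xA t * Is - As * xI t) = xI t * Ts"
      by (simp add: Ts_def algebra_simps)
    then show "(Is * ?T t - etaC * (xC t * Is - Cs * xI t) - etaA * (xA t * Is - As * xI t)) / Ts = xI t"
      using Ts_pos by simp
  qed
  have Cl: "(xC \<longlongrightarrow> Cs) at_top"
  proof (rule ev_eq[where T=0])
    have "((\<lambda>t. ((xC t * Is - Cs * xI t) + Cs * xI t) / Is) \<longlongrightarrow> (0 + Cs * Is) / Is) at_top"
      using Is_pos by (intro tendsto_intros X Il) simp
    then show "((\<lambda>t. ((xC t * Is - Cs * xI t) + Cs * xI t) / Is) \<longlongrightarrow> Cs) at_top" using Is_pos by simp
    fix t :: real show "((xC t * Is - Cs * xI t) + Cs * xI t) / Is = xC t" using Is_pos by simp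
  qed
  have Al: "(xA \<longlongrightarrow> As) at_top"
  proof (rule ev_eq[where T=0])
    have "((\<lambda>t. ((xA t * Is - As * xI t) + As * xI t) / Is) \<longlongrightarrow> (0 + As * Is) / Is) at_top"
      using Is_pos by (intro tendsto_intros Y Il) simp
    then show "((\<lambda>t. ((xA t * Is - As * xI t) + As * xI t) / Is) \<longlongrightarrow> As) at_top" using Is_pos by simp
    fix t :: real show "((xA t * Is - As * xI t) + As * xI t) / Is = xA t" using Is_pos by simp
  qed
  have "((\<lambda>t. (xS t, xI t, xC t, xA t, xE t)) \<longlongrightarrow> (Ss, Is, Cs, As, Es)) at_top"
    by (intro tendsto_Pair Sl Il Cl Al El)
  moreover have "(\<lambda>t. (xS t, xI t, xC t, xA t, xE t)) = x" by (simp add: fun_eq_iff x_eq[symmetric])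
  ultimately show ?thesis by (simp add: peq_def)
qed

end

context hiv begin

lemma hs_intro: "is_solution FF x \<Longrightarrow> x 0 \<in> OmegaP Lam mu psi \<Longrightarrow> hivsol Lam mu beta rho phi alpha omega psi etaC etaA x"
  by (intro hivsol.intro hiv_axioms) (simp add: hivsol_axioms_def)

lemma comp_close: "(a - b)^2 \<le> D^2 \<Longrightarrow> D \<ge> 0 \<Longrightarrow> \<bar>a - b\<bar> \<le> (D::real)"
  using power2_le_iff_abs_le by blast

lemma stab:
  "\<forall>\<epsilon>>0. \<exists>\<delta>>0. \<forall>x. is_solution FF x \<and> x 0 \<in> OmegaP Lam mu psi - OmegaP0 Lam mu psi \<and> dist (x 0) peq < \<delta>
          \<longrightarrow> (\<forall>t\<ge>0. dist (x t) peq < \<epsilon>)"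
proof (intro allI impI)
  fix \<epsilon> :: real assume ep: "\<epsilon> > 0"
  define h where "h = min (min Ss Is) (min Cs As) / 2"
  define m where "m = min 1 (cL / KU)"
  define \<delta> where "\<delta> = min h (\<epsilon> * m)"
  have h0: "h > 0" using Ss_pos Is_pos Cs_pos As_pos by (simp add: h_def)
  have m0: "m > 0" using cL_pos KU_pos by (simp add: m_def)
  have m1: "m \<le> 1" "m \<le> cL / KU" by (simp_all add: m_def)
  have d0: "\<delta> > 0" using h0 m0 ep by (simp add: \<delta>_def)
  have hle: "h \<le> Ss / 2" "h \<le> Is / 2" "h \<le> Cs / 2" "h \<le> As / 2" by (simp_all add: h_def min_le_iff_disj divide_right_mono)
  show "\<exists>\<delta>>0. \<forall>x. is_solution FF x \<and> x 0 \<in> OmegaP Lam mu psi - OmegaP0 Lam mu psi \<and> dist (x 0) peq < \<delta>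
          \<longrightarrow> (\<forall>t\<ge>0. dist (x t) peq < \<epsilon>)"
  proof (intro exI conjI allI impI)
    show "\<delta> > 0" by (rule d0)
    fix x :: "real \<Rightarrow> state5" and t :: real
    assume H: "is_solution FF x \<and> x 0 \<in> OmegaP Lam mu psi - OmegaP0 Lam mu psi \<and> dist (x 0) peq < \<delta>" and t: "t \<ge> 0"
    interpret s: hivsol Lam mu beta rho phi alpha omega psi etaC etaA x
      by (rule hs_intro) (use H in auto)
    define D0 where "D0 = dist (x 0) peq"
    have D0d: "D0 < \<delta>" using H by (simp add: D0_def)
    have D00: "D0 \<ge> 0" by (simp add: D0_def)
    have dsq: "\<And>u. dist (x u) peq ^ 2 = (s.xS u - Ss)^2 + (s.xI u - Is)^2 + (s.xC u - Cs)^2 + (s.xA u - As)^2 + (s.xE u - Es)^2"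
      unfolding peq_def by (subst s.x_eq) (rule dist_sq5)
    have D0sq: "D0^2 = (s.xS 0 - Ss)^2 + (s.xI 0 - Is)^2 + (s.xC 0 - Cs)^2 + (s.xA 0 - As)^2 + (s.xE 0 - Es)^2"
      unfolding D0_def by (rule dsq)
    have c1: "\<bar>s.xS 0 - Ss\<bar> \<le> D0" by (rule comp_close) (use D0sq D00 in simp_all)
    have c2: "\<bar>s.xI 0 - Is\<bar> \<le> D0" by (rule comp_close) (use D0sq D00 in simp_all)
    have c3: "\<bar>s.xC 0 - Cs\<bar> \<le> D0" by (rule comp_close) (use D0sq D00 in simp_all)
    have c4: "\<bar>s.xA 0 - As\<bar> \<le> D0" by (rule comp_close) (use D0sq D00 in simp_all)
    have Dh: "D0 < h" using D0d by (simp add: \<delta>_def)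
    have g1: "s.xS 0 \<ge> Ss / 2" using c1 Dh hle by (simp add: abs_le_iff)
    have g2: "s.xI 0 \<ge> Is / 2" using c2 Dh hle by (simp add: abs_le_iff)
    have g3: "s.xC 0 \<ge> Cs / 2" using c3 Dh hle by (simp add: abs_le_iff)
    have g4: "s.xA 0 \<ge> As / 2" using c4 Dh hle by (simp add: abs_le_iff)
    have p0: "s.xS 0 > 0" "s.xI 0 > 0" "s.xC 0 > 0" "s.xA 0 > 0"
      using g1 g2 g3 g4 Ss_pos Is_pos Cs_pos As_pos by linarith+
    have pos: "s.xS u > 0 \<and> s.xI u > 0 \<and> s.xC u > 0 \<and> s.xA u > 0" if "u \<ge> 0" for u
      by (rule s.pos_all0[OF p0 that])
    have Vmono: "VV (s.xS t) (s.xI t) (s.xC t) (s.xA t) (s.xE t) \<le> VV (s.xS 0) (s.xI 0) (s.xC 0) (s.xA 0) (s.xE 0)"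
    proof (rule antimono_from_deriv[where f="\<lambda>u. VV (s.xS u) (s.xI u) (s.xC u) (s.xA u) (s.xE u)"
          and f'="\<lambda>u. dV (s.xS u) (s.xI u) (s.xC u) (s.xA u) (s.xE u)"])
      have nz: "\<forall>u\<in>{0..}. s.xS u \<noteq> 0" "\<forall>u\<in>{0..}. s.xI u \<noteq> 0" "\<forall>u\<in>{0..}. s.xC u \<noteq> 0" "\<forall>u\<in>{0..}. s.xA u \<noteq> 0"
        using pos by force+
      show "continuous_on {0..} (\<lambda>u. VV (s.xS u) (s.xI u) (s.xC u) (s.xA u) (s.xE u))"
        unfolding VV_def using s.contS s.contI s.contC s.contA s.contE nz by (intro continuous_intros) auto
      fix u :: real assume u: "u > 0"
      have pu: "s.xS u > 0" "s.xI u > 0" "s.xC u > 0" "s.xA u > 0" using pos[of u] u by auto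
      show "((\<lambda>u. VV (s.xS u) (s.xI u) (s.xC u) (s.xA u) (s.xE u)) has_real_derivative dV (s.xS u) (s.xI u) (s.xC u) (s.xA u) (s.xE u)) (at u)"
        by (rule s.d_VV[OF u pu])
      have b: "s.xS u \<le> Bx" "s.xI u \<le> Bx" "s.xC u \<le> Bx" "s.xA u \<le> Bx" using s.box[of u] u by auto
      have "dV (s.xS u) (s.xI u) (s.xC u) (s.xA u) (s.xE u) \<le> - kap * FFn (s.xS u) (s.xI u) (s.xC u) (s.xA u) (s.xE u)"
        by (rule lyap_ineq[OF pu(1) b(1) pu(2) b(2) pu(3) b(3) pu(4) b(4)])
      moreover have "kap * FFn (s.xS u) (s.xI u) (s.xC u) (s.xA u) (s.xE u) \<ge> 0" using kap_pos FFn_nn by simp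
      ultimately show "dV (s.xS u) (s.xI u) (s.xC u) (s.xA u) (s.xE u) \<le> 0" by simp
    qed (use t in auto)
    have pt: "s.xS t > 0" "s.xI t > 0" "s.xC t > 0" "s.xA t > 0" using pos[OF t] by auto
    have bt: "s.xS t \<le> Bx" "s.xI t \<le> Bx" "s.xC t \<le> Bx" "s.xA t \<le> Bx" using s.box[OF t] by auto
    have low: "cL * dist (x t) peq ^ 2 \<le> VV (s.xS t) (s.xI t) (s.xC t) (s.xA t) (s.xE t) - VV Ss Is Cs As Es"
      unfolding dsq by (rule VV_lower[OF pt(1) bt(1) pt(2) bt(2) pt(3) bt(3) pt(4) bt(4)])
    have up: "VV (s.xS 0) (s.xI 0) (s.xC 0) (s.xA 0) (s.xE 0) - VV Ss Is Cs As Es \<le> KU * D0^2"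
      unfolding D0sq by (rule VV_upper[OF g1 g2 g3 g4])
    have "D0^2 < \<delta>^2" using D0d D00 by (intro power_strict_mono) auto
    moreover have "\<delta>^2 \<le> (\<epsilon> * m)^2" using d0 by (intro power_mono) (simp_all add: \<delta>_def)
    moreover have "(\<epsilon> * m)^2 \<le> \<epsilon>^2 * (cL / KU)"
    proof -
      have "(\<epsilon> * m)^2 = \<epsilon>^2 * (m * m)" by (simp add: power2_eq_square)
      also have "\<dots> \<le> \<epsilon>^2 * m" using m0 m1 by (intro mult_left_mono) (simp_all add: mult_le_cancel_left1)
      also have "\<dots> \<le> \<epsilon>^2 * (cL / KU)" using m1 by (intro mult_left_mono) simp_all
      finally show ?thesis .
    qed
    ultimately have "D0^2 < \<epsilon>^2 * (cL / KU)" by linarith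
    then have "KU * D0^2 < KU * (\<epsilon>^2 * (cL / KU))" by (rule mult_strict_left_mono[OF _ KU_pos])
    also have "\<dots> = cL * \<epsilon>^2" using KU_pos by simp
    finally have "cL * dist (x t) peq ^ 2 < cL * \<epsilon>^2" using low up Vmono by linarith
    then have "dist (x t) peq ^ 2 < \<epsilon>^2" using cL_pos by simp
    then show "dist (x t) peq < \<epsilon>" by (rule power2_less_imp_less) (use ep in linarith)
  qed
qed

lemma attract:
  assumes "is_solution FF x" "x 0 \<in> OmegaP Lam mu psi - OmegaP0 Lam mu psi"
  shows "(x \<longlongrightarrow> peq) at_top"
proof -
  interpret s: hivsol Lam mu beta rho phi alpha omega psi etaC etaA x
    by (rule hs_intro) (use assms in auto)
  have x0: "x 0 = (s.xS 0, s.xI 0, s.xC 0, s.xA 0, s.xE 0)" by (rule s.x_eq)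
  have n0: "x 0 \<notin> OmegaP0 Lam mu psi" and i0: "x 0 \<in> OmegaP Lam mu psi" using assms(2) by simp_all
  have "\<not> (s.xI 0 = 0 \<and> s.xC 0 = 0 \<and> s.xA 0 = 0)"
  proof
    assume z: "s.xI 0 = 0 \<and> s.xC 0 = 0 \<and> s.xA 0 = 0"
    have "x 0 \<in> OmegaP0 Lam mu psi" using i0 z unfolding OmegaP0_def x0 by simp
    with n0 show False by simp
  qed
  then have "s.xI 0 > 0 \<or> s.xC 0 > 0 \<or> s.xA 0 > 0" using s.init(2) s.init(3) s.init(4) by (smt (verit))
  then show ?thesis by (rule s.conv)
qed

lemma gas: "gas_in FF peq (OmegaP Lam mu psi - OmegaP0 Lam mu psi)"
  unfolding gas_in_def using peq_eq stab attract by blast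

end

theorem mainTheorem4:
  fixes Lam mu beta rho phi alpha omega psi etaC etaA :: real
  assumes "Lam > 0" "mu > 0" "beta > 0" "rho > 0" "phi > 0" "alpha > 0" "omega > 0"
    and "psi \<ge> 0" and "0 < etaC" "etaC \<le> 1" and "etaA \<ge> 1"
    and "R0 Lam mu beta rho phi alpha omega psi etaC etaA > 1"
  shows "(\<exists>!p. hiv_rhs Lam mu beta rho phi alpha omega psi etaC etaA p = 0 \<and>
              fst (snd p) > 0 \<and> fst (snd (snd p)) > 0 \<and> fst (snd (snd (snd p))) > 0) \<and>
         (\<forall>p. hiv_rhs Lam mu beta rho phi alpha omega psi etaC etaA p = 0 \<and>
              fst (snd p) > 0 \<and> fst (snd (snd p)) > 0 \<and> fst (snd (snd (snd p))) > 0 \<longrightarrow>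
           (let beta1 = beta * mu / Lam; xi1 = alpha + mu; xi2 = omega + mu;
                St = mu * (xi1 * (phi + xi2) + rho * xi2)
                     / (beta1 * (xi1 * (xi2 + etaC * phi) + etaA * rho * xi2))
            in fst p = St \<and> snd (snd (snd (snd p))) = psi * St / mu \<and>
               gas_in (hiv_rhs Lam mu beta rho phi alpha omega psi etaC etaA) p
                 (OmegaP Lam mu psi - OmegaP0 Lam mu psi)))"
proof -
  interpret h: hiv Lam mu beta rho phi alpha omega psi etaC etaA
    by unfold_locales (use assms in auto)
  have uniq: "p = h.peq" if "hiv_rhs Lam mu beta rho phi alpha omega psi etaC etaA p = 0" "fst (snd p) > 0" for p
  proof -
    obtain a b c d e where p: "p = (a, b, c, d, e)" by (cases p) auto
    show ?thesis unfolding p by (rule h.peq_unique) (use that p in auto)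
  qed
  have pe: "hiv_rhs Lam mu beta rho phi alpha omega psi etaC etaA h.peq = 0 \<and>
       fst (snd h.peq) > 0 \<and> fst (snd (snd h.peq)) > 0 \<and> fst (snd (snd (snd h.peq))) > 0"
    using h.peq_eq h.Is_pos h.Cs_pos h.As_pos by (simp add: h.peq_def)
  have St: "(beta * mu / Lam) = h.b1" "alpha + mu = h.xi1" "omega + mu = h.xi2"
    by (simp_all add: h.b1_def h.xi1_def h.xi2_def)
  show ?thesis
  proof (intro conjI allI impI)
    show "\<exists>!p. hiv_rhs Lam mu beta rho phi alpha omega psi etaC etaA p = 0 \<and>
              fst (snd p) > 0 \<and> fst (snd (snd p)) > 0 \<and> fst (snd (snd (snd p))) > 0"
      using pe uniq by blast
    fix p assume P: "hiv_rhs Lam mu beta rho phi alpha omega psi etaC etaA p = 0 \<and>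
              fst (snd p) > 0 \<and> fst (snd (snd p)) > 0 \<and> fst (snd (snd (snd p))) > 0"
    then have pp: "p = h.peq" using uniq by blast
    show "let beta1 = beta * mu / Lam; xi1 = alpha + mu; xi2 = omega + mu;
                St = mu * (xi1 * (phi + xi2) + rho * xi2)
                     / (beta1 * (xi1 * (xi2 + etaC * phi) + etaA * rho * xi2))
            in fst p = St \<and> snd (snd (snd (snd p))) = psi * St / mu \<and>
               gas_in (hiv_rhs Lam mu beta rho phi alpha omega psi etaC etaA) p
                 (OmegaP Lam mu psi - OmegaP0 Lam mu psi)"
      unfolding Let_def St pp using h.gas
      by (simp add: h.peq_def h.Ss_def h.Es_def)
  qed
qed


end
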